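(* Let $\mathcal{M}=[0,S)\times_h\mathbb{S}^{N-1}$ be a model manifold with pole $O$, let $\Omega\subset\mathcal{M}$ be a bounded $C^1$ domain containing $O$, and let $R_1=\min_{\partial\Omega}r$, $R_2=\max_{\partial\Omega}r$. Suppose that $h'(r)<0$ for $r$ in an interval $(R_0,R)$ with $[R_0,R]\subset(0,S)$, and that $(R_1,R_2)\subset(R_0,R)$. Let $\kappa_0\in\mathbb{R}$ and let $\varphi\in C^1([R_0,R])$ satisfy $\varphi'(r)\ge -h(r)$ for all $r\in[R_0,R]$. If the overdetermined problem $$-\Delta u=N\,h'(r)\ \text{in }\Omega,\qquad u=\varphi(r)\ \text{on }\partial\Omega,\qquad u_\nu=\kappa_0\ \text{on }\partial\Omega$$ has a classical solution $u\in C^2(\Omega)\cap C^1(\overline\Omega)$, then $u$ is radial and $\Omega$ is a geodesic ball centered at $O$.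
   Context: Model manifold: $N\ge2$, $S\in(0,+\infty]$, $h\in C^\infty([0,S))$ with $h>0$ on $(0,S)$, $h'(0)=1$, $h^{(2k)}(0)=0$ for all $k\ge0$; $\mathcal{M}$ is $[0,S)\times\mathbb{S}^{N-1}$ with $\{0\}\times\mathbb{S}^{N-1}$ identified to the pole $O$, metric $dr^2+h(r)^2g_{\mathbb{S}^{N-1}}$; $r$ is geodesic distance to $O$, $B_\rho(O)=\{r<\rho\}$, $\Delta$ the Laplace–Beltrami operator; radial means depending only on $r$; $\nu$ is the outward unit normal to $\partial\Omega$, $u_\nu=\partial u/\partial\nu$. *)

theory Defs
  imports "HOL-Analysis.Analysis"
begin

text \<open>The model manifold [0,S) x_h S^(N-1) is represented in geodesic polar
  (normal) coordinates as the set of x in R^N with ereal (norm x) < S, the pole O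
  being 0 and r = norm x.  In these coordinates the metric is
  g_x = e e^T + (h r / r)^2 (I - e e^T), e = x / r (x \<noteq> 0), g_0 = I.\<close>

definition model_space :: "ereal \<Rightarrow> (real^'n) set" where
  "model_space S = {x. ereal (norm x) < S}"

definition smooth_profile :: "ereal \<Rightarrow> (real \<Rightarrow> real) \<Rightarrow> (nat \<Rightarrow> real \<Rightarrow> real) \<Rightarrow> bool" where
  "smooth_profile S h D \<longleftrightarrow>
     (\<forall>r. 0 \<le> r \<and> ereal r < S \<longrightarrow> D 0 r = h r) \<and>
     (\<forall>k r. 0 \<le> r \<and> ereal r < S \<longrightarrow>
        (D k has_real_derivative D (Suc k) r) (at r within {t. 0 \<le> t \<and> ereal t < S}))"

text \<open>Inverse metric g^{-1}_x applied to a covector w (given as a vector).\<close>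
definition ginv :: "(real \<Rightarrow> real) \<Rightarrow> real^'n \<Rightarrow> real^'n \<Rightarrow> real^'n" where
  "ginv h x w = (if x = 0 then w else
     (let \<rho> = h (norm x) / norm x; e = x /\<^sub>R norm x in
        (1 / \<rho>^2) *\<^sub>R w + ((1 - 1 / \<rho>^2) * (e \<bullet> w)) *\<^sub>R e))"

definition egrad :: "(real^'n \<Rightarrow> real) \<Rightarrow> real^'n \<Rightarrow> real^'n" where
  "egrad u x = (\<chi> i. frechet_derivative u (at x) (axis i 1))"

definition ediv :: "(real^'n \<Rightarrow> real^'n) \<Rightarrow> real^'n \<Rightarrow> real" where
  "ediv V x = (\<Sum>i\<in>UNIV. frechet_derivative V (at x) (axis i 1) $ i)"

text \<open>Laplace-Beltrami operator in coordinates, at x \<noteq> 0: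
  Delta u = (det g)^(-1/2) div((det g)^(1/2) g^{-1} grad u), with (det g)^(1/2) = (h r / r)^(N-1).\<close>
definition laplace_beltrami :: "(real \<Rightarrow> real) \<Rightarrow> (real^'n \<Rightarrow> real) \<Rightarrow> real^'n \<Rightarrow> real" where
  "laplace_beltrami h u x =
     (let vol = (\<lambda>y::real^'n. (h (norm y) / norm y) ^ (CARD('n) - 1)) in
       (1 / vol x) * ediv (\<lambda>y. vol y *\<^sub>R ginv h y (egrad u y)) x)"

definition C2_on :: "(real^'n) set \<Rightarrow> (real^'n \<Rightarrow> real) \<Rightarrow> bool" where
  "C2_on A u \<longleftrightarrow> (\<forall>x\<in>A. u differentiable (at x)) \<and> (\<forall>x\<in>A. egrad u differentiable (at x)) \<and>
     (\<forall>i j. continuous_on A (\<lambda>x. frechet_derivative (egrad u) (at x) (axis i 1) $ j))"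

definition C1_defining :: "(real^'n) set \<Rightarrow> (real^'n) set \<Rightarrow> (real^'n \<Rightarrow> real) \<Rightarrow> (real^'n \<Rightarrow> real^'n) \<Rightarrow> bool" where
  "C1_defining \<Omega> U \<psi> D\<psi> \<longleftrightarrow> open U \<and>
     (\<forall>x\<in>U. (\<psi> has_derivative (\<lambda>v. D\<psi> x \<bullet> v)) (at x)) \<and> continuous_on U D\<psi> \<and>
     (\<forall>x\<in>U. D\<psi> x \<noteq> 0) \<and> \<Omega> \<inter> U = {x\<in>U. \<psi> x < 0}"

definition C1_domain :: "(real^'n) set \<Rightarrow> bool" where
  "C1_domain \<Omega> \<longleftrightarrow> open \<Omega> \<and> connected \<Omega> \<and> \<Omega> \<noteq> {} \<and>
     (\<forall>p\<in>frontier \<Omega>. \<exists>U \<psi> D\<psi>. p \<in> U \<and> C1_defining \<Omega> U \<psi> D\<psi>)"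

text \<open>Outward g-unit normal at p from a local defining function: grad_g psi / |grad_g psi|_g.\<close>
definition outward_normal :: "(real \<Rightarrow> real) \<Rightarrow> (real^'n \<Rightarrow> real^'n) \<Rightarrow> real^'n \<Rightarrow> real^'n" where
  "outward_normal h D\<psi> p = (1 / sqrt (D\<psi> p \<bullet> ginv h p (D\<psi> p))) *\<^sub>R ginv h p (D\<psi> p)"

end

theory Submission
  imports Defs
begin

definition volf :: "(real \<Rightarrow> real) \<Rightarrow> real^'n \<Rightarrow> real" where
  "volf h y = (h (norm y) / norm y) ^ (CARD('n) - 1)"

definition Vf :: "(real \<Rightarrow> real) \<Rightarrow> (real^'n \<Rightarrow> real) \<Rightarrow> real^'n \<Rightarrow> real^'n" where
  "Vf h f y = volf h y *\<^sub>R ginv h y (egrad f y)"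

lemma LB_eq: "laplace_beltrami h f x = (1 / volf h x) * ediv (Vf h f) x"
  unfolding laplace_beltrami_def Let_def Vf_def volf_def by simp

lemma linear_egrad:
  fixes f' :: "real^'n \<Rightarrow> real"
  assumes "linear f'"
  shows "f' v = (\<chi> i. f' (axis i 1)) \<bullet> v"
proof -
  have "f' v = f' (\<Sum>i\<in>UNIV. (v$i) *\<^sub>R axis i 1)"
    using basis_expansion[of v] by (simp add: scalar_mult_eq_scaleR)
  also have "\<dots> = (\<Sum>i\<in>UNIV. v$i * f' (axis i 1))"
    using assms by (simp add: linear_sum linear_scale)
  also have "\<dots> = (\<chi> i. f' (axis i 1)) \<bullet> v"
    by (simp add: inner_vec_def mult.commute)
  finally show ?thesis .
qed

lemma egrad_at:
  fixes f :: "real^'n \<Rightarrow> real"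
  assumes "(f has_derivative f') (at x)"
  shows "egrad f x = (\<chi> i. f' (axis i 1))" "f' v = egrad f x \<bullet> v"
proof -
  show 1: "egrad f x = (\<chi> i. f' (axis i 1))"
    unfolding egrad_def using frechet_derivative_at[OF assms] by simp
  have "linear f'" using assms has_derivative_linear by blast
  then show "f' v = egrad f x \<bullet> v" using linear_egrad 1 by metis
qed

lemma has_derivative_egrad:
  fixes f :: "real^'n \<Rightarrow> real"
  assumes "f differentiable (at x)"
  shows "(f has_derivative (\<lambda>v. egrad f x \<bullet> v)) (at x)"
proof -
  have d: "(f has_derivative frechet_derivative f (at x)) (at x)"
    using assms frechet_derivative_works by blast
  have "frechet_derivative f (at x) = (\<lambda>v. egrad f x \<bullet> v)"
    using egrad_at(2)[OF d] by auto
  then show ?thesis using d by simp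
qed

lemma ginv_lin:
  "ginv h y (a *\<^sub>R w1 + b *\<^sub>R w2) = a *\<^sub>R ginv h y w1 + b *\<^sub>R ginv h y w2"
  unfolding ginv_def Let_def
  by (simp add: inner_add_right algebra_simps scaleR_add_right)

lemma ginv_nz:
  "y \<noteq> 0 \<Longrightarrow> ginv h y w = (1 / (h (norm y) / norm y)^2) *\<^sub>R w +
     ((1 - 1 / (h (norm y) / norm y)^2) * ((y /\<^sub>R norm y) \<bullet> w)) *\<^sub>R (y /\<^sub>R norm y)"
  unfolding ginv_def Let_def by simp

lemma ginv_radial:
  assumes "y \<noteq> 0" "h (norm y) \<noteq> 0"
  shows "ginv h y (c *\<^sub>R y) = c *\<^sub>R y"
proof -
  have n: "norm y \<noteq> 0" using assms by simp
  have yy: "y \<bullet> y = (norm y)^2" by (simp add: dot_square_norm)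
  define a where "a = 1 / (h (norm y) / norm y)^2"
  have "ginv h y (c *\<^sub>R y) = a *\<^sub>R (c *\<^sub>R y) + ((1 - a) * ((y /\<^sub>R norm y) \<bullet> (c *\<^sub>R y))) *\<^sub>R (y /\<^sub>R norm y)"
    using assms(1) by (simp add: ginv_nz a_def)
  also have "\<dots> = (a * c + (1 - a) * c) *\<^sub>R y"
    using n yy by (simp add: scaleR_left_distrib power2_eq_square)
  also have "\<dots> = c *\<^sub>R y" by (simp add: algebra_simps)
  finally show ?thesis .
qed

lemma rho_diff:
  fixes z :: "real^'n"
  assumes "z \<noteq> 0" "h differentiable (at (norm z))"
  shows "(\<lambda>y. h (norm y) / norm y) differentiable (at z)"
proof -
  have "(\<lambda>y. h (norm y)) differentiable (at z)"
    by (rule differentiable_compose[of h norm], use assms in auto)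
  then show ?thesis using assms by (intro differentiable_divide) auto
qed

lemma Vdiff:
  fixes z :: "real^'n" and g :: "real^'n \<Rightarrow> real^'n"
  assumes z: "z \<noteq> 0" and hd: "h differentiable (at (norm z))" and hz: "h (norm z) \<noteq> 0"
    and gd: "g differentiable (at z)"
  shows "(\<lambda>y. volf h y *\<^sub>R ginv h y (g y)) differentiable (at z)"
proof -
  define r where "r = (\<lambda>y::real^'n. h (norm y) / norm y)"
  have rd: "r differentiable (at z)" unfolding r_def by (rule rho_diff[OF z hd])
  have rz: "r z \<noteq> 0" using z hz by (simp add: r_def)
  have ed: "(\<lambda>y::real^'n. y /\<^sub>R norm y) differentiable (at z)"
    using z by (auto intro!: derivative_intros)
  let ?K = "\<lambda>y. (r y)^(CARD('n) - 1) *\<^sub>R ((1 / (r y)^2) *\<^sub>R g y +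
     ((1 - 1 / (r y)^2) * ((y /\<^sub>R norm y) \<bullet> g y)) *\<^sub>R (y /\<^sub>R norm y))"
  have "?K differentiable (at z)"
    using rd rz ed gd z by (intro derivative_intros differentiable_inner) auto
  moreover have "?K y = volf h y *\<^sub>R ginv h y (g y)" if "dist y z < norm z" for y
  proof -
    have "y \<noteq> 0" using that by (auto simp: dist_norm)
    then show ?thesis by (simp add: ginv_nz volf_def r_def)
  qed
  ultimately show ?thesis
    using differentiable_transform_within[of ?K z UNIV "norm z"] z by auto
qed

lemma egrad_lin:
  fixes f1 f2 :: "real^'n \<Rightarrow> real"
  assumes "f1 differentiable (at y)" "f2 differentiable (at y)"
  shows "egrad (\<lambda>x. a * f1 x + b * f2 x) y = a *\<^sub>R egrad f1 y + b *\<^sub>R egrad f2 y"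
proof -
  have "((\<lambda>x. a * f1 x + b * f2 x) has_derivative (\<lambda>v. a * (egrad f1 y \<bullet> v) + b * (egrad f2 y \<bullet> v))) (at y)"
    using has_derivative_egrad[OF assms(1)] has_derivative_egrad[OF assms(2)]
    by (intro derivative_intros) auto
  from egrad_at(1)[OF this] show ?thesis
    by (simp add: vec_eq_iff inner_axis)
qed

lemma ediv_lin:
  fixes V1 V2 :: "real^'n \<Rightarrow> real^'n"
  assumes "V1 differentiable (at z)" "V2 differentiable (at z)"
    "open A" "z \<in> A" "\<And>y. y \<in> A \<Longrightarrow> V y = a *\<^sub>R V1 y + b *\<^sub>R V2 y"
  shows "ediv V z = a * ediv V1 z + b * ediv V2 z"
proof -
  have d: "((\<lambda>y. a *\<^sub>R V1 y + b *\<^sub>R V2 y) has_derivative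
      (\<lambda>v. a *\<^sub>R frechet_derivative V1 (at z) v + b *\<^sub>R frechet_derivative V2 (at z) v)) (at z)"
    using assms(1,2) unfolding frechet_derivative_works by (intro derivative_intros) auto
  have "(V has_derivative
      (\<lambda>v. a *\<^sub>R frechet_derivative V1 (at z) v + b *\<^sub>R frechet_derivative V2 (at z) v)) (at z)"
    by (rule has_derivative_transform_within_open[OF d assms(3,4)]) (simp add: assms(5))
  from frechet_derivative_at[OF this, symmetric] show ?thesis
    unfolding ediv_def by (simp add: sum.distrib sum_distrib_left)
qed

lemma Vf_diff:
  fixes z :: "real^'n" and f :: "real^'n \<Rightarrow> real"
  assumes "z \<noteq> 0" "h differentiable (at (norm z))" "h (norm z) \<noteq> 0"
    "egrad f differentiable (at z)"
  shows "Vf h f differentiable (at z)"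
  unfolding Vf_def[abs_def] using Vdiff[OF assms] .

lemma LB_lin:
  fixes z :: "real^'n" and f1 f2 :: "real^'n \<Rightarrow> real"
  assumes z: "z \<noteq> 0" and A: "open A" "z \<in> A"
    and d1: "\<And>y. y \<in> A \<Longrightarrow> f1 differentiable (at y)"
    and d2: "\<And>y. y \<in> A \<Longrightarrow> f2 differentiable (at y)"
    and g1: "egrad f1 differentiable (at z)" and g2: "egrad f2 differentiable (at z)"
    and hd: "h differentiable (at (norm z))" and hz: "h (norm z) \<noteq> 0"
  shows "laplace_beltrami h (\<lambda>x. a * f1 x + b * f2 x) z =
         a * laplace_beltrami h f1 z + b * laplace_beltrami h f2 z"
proof -
  have "ediv (Vf h (\<lambda>x. a * f1 x + b * f2 x)) z = a * ediv (Vf h f1) z + b * ediv (Vf h f2) z"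
  proof (rule ediv_lin[OF Vf_diff[OF z hd hz g1] Vf_diff[OF z hd hz g2] A])
    fix y assume "y \<in> A"
    then have "egrad (\<lambda>x. a * f1 x + b * f2 x) y = a *\<^sub>R egrad f1 y + b *\<^sub>R egrad f2 y"
      using egrad_lin d1 d2 by blast
    then show "Vf h (\<lambda>x. a * f1 x + b * f2 x) y = a *\<^sub>R Vf h f1 y + b *\<^sub>R Vf h f2 y"
      by (simp add: Vf_def ginv_lin scaleR_add_right mult.commute)
  qed
  then show ?thesis by (simp add: LB_eq algebra_simps)
qed

lemma sumQ:
  fixes L :: "real^'n \<Rightarrow> real^'n" and e :: "real^'n"
  assumes L: "linear L" and e: "norm e = 1"
  shows "(\<Sum>i\<in>UNIV. (axis i 1 - e$i *\<^sub>R e) \<bullet> L (axis i 1 - e$i *\<^sub>R e)) =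
         (\<Sum>i\<in>UNIV. L (axis i 1) $ i) - e \<bullet> L e"
    and "(\<Sum>i\<in>UNIV. (e \<bullet> L (axis i 1)) * e$i) = e \<bullet> L e"
proof -
  have ee: "(\<Sum>i\<in>UNIV. (e$i) *\<^sub>R axis i 1) = e"
    using basis_expansion[of e] by (simp add: scalar_mult_eq_scaleR)
  have s2: "(\<Sum>i\<in>UNIV. (e \<bullet> L (axis i 1)) * e$i) = e \<bullet> L e"
  proof -
    have "(\<Sum>i\<in>UNIV. (e \<bullet> L (axis i 1)) * e$i) = e \<bullet> L (\<Sum>i\<in>UNIV. (e$i) *\<^sub>R axis i 1)"
      using L by (simp add: linear_sum linear_scale inner_sum_right mult.commute)
    then show ?thesis using ee by simp
  qed
  show "(\<Sum>i\<in>UNIV. (e \<bullet> L (axis i 1)) * e$i) = e \<bullet> L e" by (rule s2)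
  have s3: "(\<Sum>i\<in>UNIV. e$i * (axis i 1 \<bullet> L e)) = e \<bullet> L e"
  proof -
    have "(\<Sum>i\<in>UNIV. e$i * (axis i 1 \<bullet> L e)) = (\<Sum>i\<in>UNIV. (e$i) *\<^sub>R axis i 1) \<bullet> L e"
      by (simp add: inner_sum_left)
    then show ?thesis using ee by simp
  qed
  have s4: "(\<Sum>i\<in>UNIV. (e$i)^2) = 1"
  proof -
    have "(\<Sum>i\<in>UNIV. (e$i)^2) = e \<bullet> e" by (simp add: inner_vec_def power2_eq_square)
    also have "\<dots> = 1" using e by (simp add: dot_square_norm)
    finally show ?thesis .
  qed
  have ex: "(axis i 1 - e$i *\<^sub>R e) \<bullet> L (axis i 1 - e$i *\<^sub>R e) =
     L (axis i 1) $ i - e$i * (axis i 1 \<bullet> L e) - (e \<bullet> L (axis i 1)) * e$i + (e$i)^2 * (e \<bullet> L e)" for i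
    using L by (simp add: linear_diff linear_scale inner_diff_left inner_diff_right inner_axis'
       algebra_simps power2_eq_square)
  show "(\<Sum>i\<in>UNIV. (axis i 1 - e$i *\<^sub>R e) \<bullet> L (axis i 1 - e$i *\<^sub>R e)) =
         (\<Sum>i\<in>UNIV. L (axis i 1) $ i) - e \<bullet> L e"
    unfolding ex by (simp add: sum.distrib sum_subtractf s2 s3 flip: sum_distrib_right)
       (simp add: s4[unfolded] sum_distrib_right[symmetric] s4)
qed

lemma second_order_max:
  fixes W :: "real^'n \<Rightarrow> real"
  assumes A: "open A" "z \<in> A" and Wd: "\<And>y. y \<in> A \<Longrightarrow> W differentiable (at y)"
    and gd: "(egrad W has_derivative Dg) (at z)" and g0: "egrad W z = 0"
    and mx: "\<And>y. y \<in> A \<Longrightarrow> W y \<le> W z"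
  shows "d \<bullet> Dg d \<le> 0"
proof (rule ccontr)
  assume "\<not> d \<bullet> Dg d \<le> 0"
  then have pos: "0 < Dg d \<bullet> d" by (simp add: inner_commute)
  obtain ep where ep: "ep > 0" "ball z ep \<subseteq> A" using A openE by blast
  have lin: "linear Dg" using gd has_derivative_linear by blast
  define psi where "psi t = egrad W (z + t *\<^sub>R d) \<bullet> d" for t :: real
  have "((\<lambda>t::real. z + t *\<^sub>R d) has_derivative (\<lambda>t. t *\<^sub>R d)) (at 0)"
    by (auto intro!: derivative_eq_intros)
  then have "((\<lambda>t. egrad W (z + t *\<^sub>R d)) has_derivative (\<lambda>t. Dg (t *\<^sub>R d))) (at 0)"
    using has_derivative_compose[of "\<lambda>t::real. z + t *\<^sub>R d" "\<lambda>t. t *\<^sub>R d" 0 UNIV "egrad W" Dg] gd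
    by simp
  then have "(psi has_derivative (\<lambda>t. Dg (t *\<^sub>R d) \<bullet> d)) (at 0)"
    unfolding psi_def by (intro derivative_eq_intros) auto
  then have "(psi has_real_derivative (Dg d \<bullet> d)) (at 0)"
    by (rule has_derivative_imp_has_field_derivative) (simp add: linear_scale[OF lin] mult.commute)
  from DERIV_pos_inc_right[OF this pos] obtain del where del: "del > 0"
    "\<And>t. t > 0 \<Longrightarrow> t < del \<Longrightarrow> psi 0 < psi (0 + t)" by blast
  have psi0: "psi 0 = 0" by (simp add: psi_def g0)
  define t where "t = min del (ep / (norm d + 1)) / 2"
  have "ep / (norm d + 1) > 0" using ep by (simp add: add_nonneg_pos)
  then have t0: "t > 0" using del by (simp add: t_def)
  have tdel: "t < del" using del ep by (simp add: t_def)
  have tep: "t * (norm d + 1) < ep"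
  proof -
    have "t \<le> (ep / (norm d + 1)) / 2" unfolding t_def by (intro divide_right_mono) auto
    then have "t * (norm d + 1) \<le> (ep / (norm d + 1)) / 2 * (norm d + 1)"
      by (intro mult_right_mono) auto
    also have "\<dots> = ep / 2"
    proof -
      have "norm d + 1 > 0" by (simp add: add_nonneg_pos)
      then show ?thesis by (simp add: field_simps)
    qed
    finally show ?thesis using ep by simp
  qed
  have inA: "z + s *\<^sub>R d \<in> A" if "0 \<le> s" "s \<le> t" for s
  proof -
    have "norm (s *\<^sub>R d) \<le> t * (norm d + 1)"
      using that t0 by (simp add: mult_mono)
    then have "dist z (z + s *\<^sub>R d) < ep" using tep by (simp add: dist_norm)
    then show ?thesis using ep by auto
  qed
  have der: "((\<lambda>s. W (z + s *\<^sub>R d)) has_real_derivative psi s) (at s)"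
    if "0 \<le> s" "s \<le> t" for s
  proof -
    have "(W has_derivative (\<lambda>v. egrad W (z + s *\<^sub>R d) \<bullet> v)) (at (z + s *\<^sub>R d))"
      using has_derivative_egrad Wd inA[OF that] by blast
    moreover have "((\<lambda>s. z + s *\<^sub>R d) has_derivative (\<lambda>r. r *\<^sub>R d)) (at s)"
      by (auto intro!: derivative_eq_intros)
    ultimately have "((\<lambda>s. W (z + s *\<^sub>R d)) has_derivative (\<lambda>r. egrad W (z + s *\<^sub>R d) \<bullet> (r *\<^sub>R d))) (at s)"
      using has_derivative_compose[of "\<lambda>s. z + s *\<^sub>R d" "\<lambda>r. r *\<^sub>R d" s UNIV W] by blast
    then show ?thesis
      by (rule has_derivative_imp_has_field_derivative) (simp add: psi_def mult.commute)
  qed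
  obtain \<xi> where xi: "0 < \<xi>" "\<xi> < t" "W (z + t *\<^sub>R d) - W (z + 0 *\<^sub>R d) = (t - 0) * psi \<xi>"
    using MVT2[of 0 t "\<lambda>s. W (z + s *\<^sub>R d)" psi] t0 der by auto
  have "psi \<xi> > 0" using del(2)[of \<xi>] xi tdel psi0 by simp
  then have "t * psi \<xi> > 0" using t0 by simp
  then have "W (z + t *\<^sub>R d) > W z" using xi by simp
  moreover have "W (z + t *\<^sub>R d) \<le> W z" using mx inA[of t] t0 by simp
  ultimately show False by simp
qed

lemma LB_max:
  fixes W :: "real^'n \<Rightarrow> real" and z :: "real^'n"
  assumes z: "z \<noteq> 0" and A: "open A" "z \<in> A"
    and Wd: "\<And>y. y \<in> A \<Longrightarrow> W differentiable (at y)"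
    and gd: "(egrad W has_derivative Dg) (at z)"
    and mx: "\<And>y. y \<in> A \<Longrightarrow> W y \<le> W z"
    and hd: "h differentiable (at (norm z))" and hz: "h (norm z) > 0"
  shows "laplace_beltrami h W z \<le> 0"
proof -
  have "(\<lambda>v. egrad W z \<bullet> v) = (\<lambda>v. 0)"
    using differential_zero_maxmin[OF A(2,1) has_derivative_egrad[OF Wd[OF A(2)]]] mx by blast
  then have g0: "egrad W z = 0" by (metis inner_eq_zero_iff)
  have Q: "d \<bullet> Dg d \<le> 0" for d
    using second_order_max[OF A Wd gd g0 mx] by blast
  have lin: "linear Dg" using gd has_derivative_linear by blast
  define r where "r = (\<lambda>y::real^'n. h (norm y) / norm y)"
  define E where "E = (\<lambda>y::real^'n. y /\<^sub>R norm y)"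
  define m where "m = CARD('n) - 1"
  have "r differentiable (at z)" unfolding r_def by (rule rho_diff[OF z hd])
  then obtain Dr where Dr: "(r has_derivative Dr) (at z)" by (auto simp: differentiable_def)
  have "E differentiable (at z)" unfolding E_def using z by (auto intro!: derivative_intros)
  then obtain DE where DE: "(E has_derivative DE) (at z)" by (auto simp: differentiable_def)
  have rz: "r z > 0" using z hz by (simp add: r_def)
  have Ez: "norm (E z) = 1" using z by (simp add: E_def)
  let ?g = "egrad W"
  define K where "K = (\<lambda>y. (r y)^m *\<^sub>R ((1 / (r y)^2) *\<^sub>R ?g y +
     ((1 - 1 / (r y)^2) * (E y \<bullet> ?g y)) *\<^sub>R E y))"
  define K' where "K' = (\<lambda>v. (r z)^m *\<^sub>R ((1 / (r z)^2) *\<^sub>R Dg v +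
     ((1 - 1 / (r z)^2) * (E z \<bullet> Dg v)) *\<^sub>R E z))"
  have "(K has_derivative K') (at z)"
    unfolding K_def K'_def using Dr DE gd rz
    by (auto intro!: derivative_eq_intros simp: g0)
  moreover have "K y = Vf h W y" if "y \<in> ball z (norm z)" for y
  proof -
    have "y \<noteq> 0" using that by (auto simp: dist_norm)
    then show ?thesis by (simp add: K_def Vf_def ginv_nz volf_def r_def E_def m_def)
  qed
  ultimately have "(Vf h W has_derivative K') (at z)"
    using has_derivative_transform_within_open[of K K' z UNIV "ball z (norm z)" "Vf h W"] z by auto
  then have fd: "frechet_derivative (Vf h W) (at z) = K'" using frechet_derivative_at by metis
  define a where "a = 1 / (r z)^2"
  define tr where "tr = (\<Sum>i\<in>UNIV. Dg (axis i 1) $ i)"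
  define Qe where "Qe = E z \<bullet> Dg (E z)"
  have "ediv (Vf h W) z = (\<Sum>i\<in>UNIV. (r z)^m * (a * Dg (axis i 1) $ i + (1 - a) * ((E z \<bullet> Dg (axis i 1)) * E z $ i)))"
    unfolding ediv_def fd K'_def a_def by (intro sum.cong) (auto simp: algebra_simps)
  also have "\<dots> = (r z)^m * (a * tr + (1 - a) * (\<Sum>i\<in>UNIV. (E z \<bullet> Dg (axis i 1)) * E z $ i))"
    unfolding tr_def by (simp add: sum.distrib sum_distrib_left[symmetric] distrib_left)
  also have "\<dots> = (r z)^m * (a * tr + (1 - a) * Qe)"
    using sumQ(2)[OF lin Ez] by (simp add: Qe_def)
  finally have ed: "ediv (Vf h W) z = (r z)^m * (a * tr + (1 - a) * Qe)" .
  have vz: "volf h z = (r z)^m" by (simp add: volf_def r_def m_def)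
  have LBv: "laplace_beltrami h W z = a * tr + (1 - a) * Qe"
    using rz by (simp add: LB_eq ed vz)
  have "tr - Qe = (\<Sum>i\<in>UNIV. (axis i 1 - E z$i *\<^sub>R E z) \<bullet> Dg (axis i 1 - E z$i *\<^sub>R E z))"
    using sumQ(1)[OF lin Ez] by (simp add: tr_def Qe_def)
  also have "\<dots> \<le> 0" by (intro sum_nonpos Q)
  finally have t1: "tr - Qe \<le> 0" .
  have t2: "Qe \<le> 0" unfolding Qe_def by (rule Q)
  have a0: "a > 0" using rz by (simp add: a_def)
  have "a * tr + (1 - a) * Qe = a * (tr - Qe) + Qe" by (simp add: algebra_simps)
  also have "\<dots> \<le> 0" using t1 t2 a0 by (simp add: mult_pos_neg add_nonpos_nonpos mult_nonneg_nonpos)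
  finally show ?thesis using LBv by simp
qed

lemma radial_has_derivative:
  fixes y :: "real^'n"
  assumes "y \<noteq> 0" "(f has_real_derivative d) (at (norm y))"
  shows "((\<lambda>x. f (norm x)) has_derivative (\<lambda>v. d * (v \<bullet> sgn y))) (at y)"
proof -
  have "(norm has_derivative (\<lambda>v. v \<bullet> sgn y)) (at y)" using has_derivative_norm[OF assms(1)] .
  moreover have "(f has_derivative (\<lambda>t. t * d)) (at (norm y))"
    using assms(2) by (simp add: has_field_derivative_def mult.commute[of _ d])
  ultimately have "((\<lambda>x. f (norm x)) has_derivative (\<lambda>v. (v \<bullet> sgn y) * d)) (at y)"
    using has_derivative_compose[of norm "\<lambda>v. v \<bullet> sgn y" y UNIV f "\<lambda>t. t * d"] by blast
  then show ?thesis by (simp add: mult.commute)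
qed

lemma egrad_radial:
  fixes y :: "real^'n"
  assumes "y \<noteq> 0" "(f has_real_derivative d) (at (norm y))"
  shows "egrad (\<lambda>x. f (norm x)) y = (d / norm y) *\<^sub>R y"
  using egrad_at(1)[OF radial_has_derivative[OF assms]] assms(1)
  by (simp add: vec_eq_iff inner_axis' sgn_div_norm field_simps)

lemma ediv_radial:
  fixes z :: "real^'n" and V :: "real^'n \<Rightarrow> real^'n"
  assumes z: "z \<noteq> 0" and A: "open A" "z \<in> A"
    and V: "\<And>y. y \<in> A \<Longrightarrow> V y = \<psi> (norm y) *\<^sub>R y"
    and d: "(\<psi> has_real_derivative \<psi>') (at (norm z))"
  shows "ediv V z = norm z * \<psi>' + real CARD('n) * \<psi> (norm z)"
proof -
  have "((\<lambda>y. \<psi> (norm y) *\<^sub>R y) has_derivative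
      (\<lambda>v. \<psi> (norm z) *\<^sub>R v + (\<psi>' * (v \<bullet> sgn z)) *\<^sub>R z)) (at z)"
    using radial_has_derivative[OF z d] by (auto intro!: derivative_eq_intros)
  then have "(V has_derivative (\<lambda>v. \<psi> (norm z) *\<^sub>R v + (\<psi>' * (v \<bullet> sgn z)) *\<^sub>R z)) (at z)"
    by (rule has_derivative_transform_within_open[OF _ A]) (simp add: V)
  from frechet_derivative_at[OF this, symmetric]
  have "ediv V z = (\<Sum>i\<in>UNIV. \<psi> (norm z) + \<psi>' * ((sgn z) $ i * z $ i))"
    unfolding ediv_def by (simp add: inner_axis' mult.assoc)
  also have "\<dots> = real CARD('n) * \<psi> (norm z) + \<psi>' * (sgn z \<bullet> z)"
    by (simp add: sum.distrib sum_distrib_left inner_vec_def)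
  also have "sgn z \<bullet> z = norm z"
    using z by (simp add: sgn_div_norm dot_square_norm power2_eq_square)
  finally show ?thesis by simp
qed

lemma LB_radial:
  fixes z :: "real^'n"
  assumes z: "z \<noteq> 0" and A: "open A" "z \<in> A" and A0: "0 \<notin> A"
    and hA: "\<And>y. y \<in> A \<Longrightarrow> h (norm y) \<noteq> 0"
    and fd: "\<And>y. y \<in> A \<Longrightarrow> (f has_real_derivative f1 (norm y)) (at (norm y))"
    and psi: "\<And>y. y \<in> A \<Longrightarrow> \<psi> (norm y) = volf h y * f1 (norm y) / norm y"
    and d: "(\<psi> has_real_derivative \<psi>') (at (norm z))"
  shows "laplace_beltrami h (\<lambda>x. f (norm x)) z = (1 / volf h z) * (norm z * \<psi>' + real CARD('n) * \<psi> (norm z))"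
proof -
  have "ediv (Vf h (\<lambda>x. f (norm x))) z = norm z * \<psi>' + real CARD('n) * \<psi> (norm z)"
  proof (rule ediv_radial[OF z A _ d])
    fix y assume y: "y \<in> A"
    then have y0: "y \<noteq> 0" using A0 by auto
    have "Vf h (\<lambda>x. f (norm x)) y = volf h y *\<^sub>R ginv h y ((f1 (norm y) / norm y) *\<^sub>R y)"
      unfolding Vf_def using egrad_radial[OF y0 fd[OF y]] by simp
    also have "\<dots> = (volf h y * f1 (norm y) / norm y) *\<^sub>R y"
      using ginv_radial[of y h "f1 (norm y) / norm y"] y0 hA[OF y] by simp
    finally show "Vf h (\<lambda>x. f (norm x)) y = \<psi> (norm y) *\<^sub>R y" using psi[OF y] by simp
  qed
  then show ?thesis by (simp add: LB_eq)
qed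

lemma egrad_radial_diff:
  fixes z :: "real^'n"
  assumes z: "z \<noteq> 0" and A: "open A" "z \<in> A" and A0: "0 \<notin> A"
    and fd: "\<And>y. y \<in> A \<Longrightarrow> (f has_real_derivative f1 (norm y)) (at (norm y))"
    and f1d: "f1 differentiable (at (norm z))"
  shows "egrad (\<lambda>x. f (norm x)) differentiable (at z)"
proof -
  have "(\<lambda>y. f1 (norm y)) differentiable (at z)"
    by (rule differentiable_compose[of f1 norm], use f1d z in auto)
  then have "(\<lambda>y. (f1 (norm y) / norm y) *\<^sub>R y) differentiable (at z)"
    using z by (intro derivative_intros) auto
  then obtain D where D: "((\<lambda>y. (f1 (norm y) / norm y) *\<^sub>R y) has_derivative D) (at z)"
    by (auto simp: differentiable_def)
  have "(egrad (\<lambda>x. f (norm x)) has_derivative D) (at z)"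
  proof (rule has_derivative_transform_within_open[OF D A])
    fix y assume "y \<in> A"
    then show "(f1 (norm y) / norm y) *\<^sub>R y = egrad (\<lambda>x. f (norm x)) y"
      using egrad_radial[of y f "f1 (norm y)"] fd A0 by (metis)
  qed
  then show ?thesis by (auto simp: differentiable_def)
qed

definition Hf :: "(real \<Rightarrow> real) \<Rightarrow> real \<Rightarrow> real" where
  "Hf h r = integral {0..r} h"
definition Ih :: "(real \<Rightarrow> real) \<Rightarrow> nat \<Rightarrow> real \<Rightarrow> real" where
  "Ih h m r = integral {0..r} (\<lambda>t. h t ^ m)"
definition qf :: "(real \<Rightarrow> real) \<Rightarrow> nat \<Rightarrow> real \<Rightarrow> real" where
  "qf h m r = (1 + Ih h m r) / h r ^ m"
definition Ff :: "(real \<Rightarrow> real) \<Rightarrow> nat \<Rightarrow> real \<Rightarrow> real \<Rightarrow> real" where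
  "Ff h m T r = - integral {r..T} (qf h m)"

context
  fixes h :: "real \<Rightarrow> real" and T :: real
  assumes T0: "0 < T" and hc: "continuous_on {0..T} h"
    and hd: "\<And>r. 0 < r \<Longrightarrow> r < T \<Longrightarrow> h differentiable (at r)"
    and hp: "\<And>r. 0 < r \<Longrightarrow> r \<le> T \<Longrightarrow> h r > 0"
    and h0: "h 0 = 0"
begin

lemma h_nonneg: "0 \<le> r \<Longrightarrow> r \<le> T \<Longrightarrow> 0 \<le> h r"
  using hp[of r] h0 by (cases "r = 0") auto

lemma Hf_deriv: "0 < r \<Longrightarrow> r < T \<Longrightarrow> (Hf h has_real_derivative h r) (at r)"
  using integral_has_real_derivative[OF hc, of r] at_within_Icc_at[of 0 r T]
  unfolding Hf_def[abs_def] by simp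

lemma Ih_deriv_within: "0 \<le> r \<Longrightarrow> r \<le> T \<Longrightarrow> (Ih h m has_real_derivative h r ^ m) (at r within {0..T})"
proof -
  have "continuous_on {0..T} (\<lambda>t. h t ^ m)" using hc by (intro continuous_intros)
  then show "0 \<le> r \<Longrightarrow> r \<le> T \<Longrightarrow> ?thesis"
    using integral_has_real_derivative[of 0 T "\<lambda>t. h t ^ m" r] unfolding Ih_def[abs_def] by simp
qed

lemma Ih_deriv: "0 < r \<Longrightarrow> r < T \<Longrightarrow> (Ih h m has_real_derivative h r ^ m) (at r)"
  using Ih_deriv_within[of r m] at_within_Icc_at[of 0 r T] by simp

lemma Ih_cont: "continuous_on {0..T} (Ih h m)"
proof -
  have "\<forall>r\<in>{0..T}. continuous (at r within {0..T}) (Ih h m)"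
    using Ih_deriv_within DERIV_continuous by fastforce
  then show ?thesis using continuous_on_eq_continuous_within by blast
qed

lemma Ih_nonneg: "0 \<le> r \<Longrightarrow> r \<le> T \<Longrightarrow> 0 \<le> Ih h m r"
  unfolding Ih_def using h_nonneg
  by (intro integral_nonneg) (auto intro!: integrable_continuous_real continuous_on_subset[OF hc] continuous_intros)

lemma qf_cont: "0 < a \<Longrightarrow> continuous_on {a..T} (qf h m)"
  unfolding qf_def[abs_def]
  using hp by (intro continuous_intros continuous_on_subset[OF hc] continuous_on_subset[OF Ih_cont])
    (auto, metis less_le_trans less_irrefl)

lemma Ff_deriv: 
  assumes "0 < r" "r < T"
  shows "(Ff h m T has_real_derivative qf h m r) (at r)"
proof -
  have "((\<lambda>x. integral {x..T} (qf h m)) has_real_derivative - qf h m r) (at r within {r/2..T})"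
    using integral_has_real_derivative'[OF qf_cont[of "r/2" m], of r] assms by simp
  moreover have "at r within {r/2..T} = at r" using assms by (intro at_within_Icc_at) auto
  ultimately show ?thesis unfolding Ff_def[abs_def]
    using DERIV_minus by fastforce
qed

lemma qf_diff:
  assumes "0 < r" "r < T"
  shows "qf h m differentiable (at r)"
proof -
  have "Ih h m differentiable (at r)" using Ih_deriv[OF assms] real_differentiable_def by blast
  then show ?thesis unfolding qf_def[abs_def] using hd[OF assms] hp[of r] assms
    by (intro derivative_intros) auto
qed


lemma Ff_to_minf:
  assumes m: "m \<ge> 1" and small: "\<exists>d>0. \<forall>t. 0 < t \<and> t < d \<longrightarrow> h t \<le> 2 * t"
  shows "\<exists>d>0. \<forall>r. 0 < r \<and> r < d \<longrightarrow> Ff h m T r < B"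
proof -
  obtain d0 where d0: "d0 > 0" "\<And>t. 0 < t \<Longrightarrow> t < d0 \<Longrightarrow> h t \<le> 2 * t" using small by blast
  define c where "c = min (d0/2) (min (1/2) (T/2))"
  have c: "0 < c" "c < d0" "c \<le> 1/2" "c < T" using d0 T0 by (auto simp: c_def)
  have qge: "qf h m t \<ge> 1 / (2 * t)" if t: "0 < t" "t \<le> c" for t
  proof -
    have ht: "h t \<le> 2 * t" using d0(2)[of t] t c by simp
    have hpos: "h t > 0" using hp[of t] t c by simp
    have "h t \<le> 1" using ht t c by simp
    then have "h t ^ m \<le> h t ^ 1" using hpos m by (intro power_decreasing) auto
    then have hm: "h t ^ m \<le> 2 * t" using ht by simp
    have I0: "0 \<le> Ih h m t" using Ih_nonneg[of t m] t c by simp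
    have hmpos: "h t ^ m > 0" using hpos by simp
    have "1 / (2 * t) \<le> 1 / h t ^ m" using hm hmpos by (intro divide_left_mono) auto
    also have "\<dots> \<le> (1 + Ih h m t) / h t ^ m" using I0 hmpos by (intro divide_right_mono) auto
    finally show ?thesis by (simp add: qf_def)
  qed
  define L where "L r = Ff h m T r - ln r / 2" for r
  have Lmono: "L r \<le> L c" if r: "0 < r" "r \<le> c" for r
  proof (rule DERIV_nonneg_imp_increasing_open[OF r(2)])
    fix x assume x: "r < x" "x < c"
    have "(L has_real_derivative qf h m x - 1 / x / 2) (at x)"
      unfolding L_def[abs_def] using x r c
      by (intro DERIV_diff Ff_deriv DERIV_cdivide DERIV_ln_divide) auto
    moreover have "qf h m x - 1 / x / 2 \<ge> 0" using qge[of x] x r by simp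
    ultimately show "\<exists>y. (L has_real_derivative y) (at x) \<and> 0 \<le> y" by blast
  next
    have "\<forall>x\<in>{r..c}. isCont L x"
    proof
      fix x assume x: "x \<in> {r..c}"
      have "(L has_real_derivative qf h m x - 1 / x / 2) (at x)"
        unfolding L_def[abs_def] using x r c
        by (intro DERIV_diff Ff_deriv DERIV_cdivide DERIV_ln_divide) auto
      then show "isCont L x" using DERIV_isCont by blast
    qed
    then show "continuous_on {r..c} L" using continuous_at_imp_continuous_on by blast
  qed
  define d where "d = min c (exp (2 * (B - L c)))"
  have "d > 0" using c by (simp add: d_def)
  moreover have "Ff h m T r < B" if r: "0 < r" "r < d" for r
  proof -
    have "L r \<le> L c" using Lmono[of r] r by (simp add: d_def)
    then have "Ff h m T r \<le> L c + ln r / 2" by (simp add: L_def)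
    moreover have "ln r < 2 * (B - L c)"
    proof -
      have "r < exp (2 * (B - L c))" using r by (simp add: d_def)
      then have "ln r < ln (exp (2 * (B - L c)))" using r by (subst ln_less_cancel_iff) auto
      then show ?thesis by simp
    qed
    ultimately show ?thesis by simp
  qed
  ultimately show ?thesis by blast
qed

lemma card_Suc: "CARD('n::finite) = Suc (CARD('n) - 1)"
  using zero_less_card_finite[where 'a='n] by simp

lemma LB_Hf:
  fixes z :: "real^'n"
  assumes z: "z \<noteq> 0" "norm z < T"
  shows "laplace_beltrami h (\<lambda>x. Hf h (norm x)) z = real CARD('n) * deriv h (norm z)"
proof -
  define N where "N = CARD('n)"
  define r0 where "r0 = norm z"
  define A where "A = ball z (norm z) \<inter> ball (0::real^'n) T"
  have A: "open A" "z \<in> A" "0 \<notin> A" using z by (auto simp: A_def dist_norm)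
  have yA: "0 < norm y" "norm y < T" if "y \<in> A" for y
    using that by (auto simp: A_def dist_norm)
  have r0: "0 < r0" "r0 < T" using z by (auto simp: r0_def)
  have hder: "(h has_real_derivative deriv h r0) (at r0)"
    using hd[OF r0] DERIV_deriv_iff_real_differentiable by blast
  define \<psi> where "\<psi> r = (h r / r) ^ N" for r
  define \<psi>' where "\<psi>' = real N * (h r0 / r0) ^ (N - 1) * ((deriv h r0 * r0 - h r0 * 1) / (r0 * r0))"
  have d: "(\<psi> has_real_derivative \<psi>') (at r0)"
    unfolding \<psi>_def[abs_def] \<psi>'_def
    using DERIV_power[OF DERIV_divide[OF hder DERIV_ident], of N] r0 by (simp add: mult_ac)
  have NS: "N = Suc (N - 1)" unfolding N_def by (rule card_Suc)
  have "laplace_beltrami h (\<lambda>x. Hf h (norm x)) z = (1 / volf h z) * (norm z * \<psi>' + real CARD('n) * \<psi> (norm z))"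
  proof (rule LB_radial[OF z(1) A])
    fix y :: "real^'n" assume y: "y \<in> A"
    show "h (norm y) \<noteq> 0" using hp[of "norm y"] yA[OF y] by simp
    show "(Hf h has_real_derivative h (norm y)) (at (norm y))" using Hf_deriv yA[OF y] by simp
    show "\<psi> (norm y) = volf h y * h (norm y) / norm y"
      unfolding \<psi>_def volf_def N_def[symmetric] by (subst NS) (simp add: power_Suc)
  qed (use d r0_def in simp)
  also have "\<dots> = real N * deriv h r0"
  proof -
    define \<rho> where "\<rho> = h r0 / r0"
    have rho0: "\<rho> \<noteq> 0" using hp[of r0] r0 by (simp add: \<rho>_def)
    have v: "volf h z = \<rho> ^ (N - 1)" by (simp add: volf_def \<rho>_def r0_def N_def)
    have p: "\<psi> r0 = \<rho> ^ (N - 1) * \<rho>" unfolding \<psi>_def \<rho>_def[symmetric]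
      by (subst NS) (simp add: power_Suc mult.commute)
    have "(1 / volf h z) * (norm z * \<psi>' + real N * \<psi> (norm z))
        = r0 * real N * ((deriv h r0 * r0 - h r0) / (r0 * r0)) + real N * \<rho>"
      unfolding v r0_def[symmetric] p \<psi>'_def \<rho>_def[symmetric] using rho0
      by (simp add: field_simps)
    also have "\<dots> = real N * deriv h r0" using r0 by (simp add: \<rho>_def field_simps)
    finally show ?thesis by (simp add: N_def)
  qed
  finally show ?thesis by (simp add: N_def r0_def)
qed


lemma LB_Ff:
  fixes z :: "real^'n"
  assumes z: "z \<noteq> 0" "norm z < T"
  shows "laplace_beltrami h (\<lambda>x. Ff h (CARD('n) - 1) T (norm x)) z = 1"
proof -
  define N where "N = CARD('n)"
  define m where "m = N - 1"
  define r0 where "r0 = norm z"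
  define A where "A = ball z (norm z) \<inter> ball (0::real^'n) T"
  have A: "open A" "z \<in> A" "0 \<notin> A" using z by (auto simp: A_def dist_norm)
  have yA: "0 < norm y" "norm y < T" if "y \<in> A" for y
    using that by (auto simp: A_def dist_norm)
  have r0: "0 < r0" "r0 < T" using z by (auto simp: r0_def)
  have NS: "N = Suc m" unfolding N_def m_def by (rule card_Suc)
  define \<psi> where "\<psi> r = (1 + Ih h m r) / r ^ N" for r
  define \<psi>' where "\<psi>' = ((0 + h r0 ^ m) * r0 ^ N - (1 + Ih h m r0) * (real N * r0 ^ (N - 1))) / (r0 ^ N * r0 ^ N)"
  have d: "(\<psi> has_real_derivative \<psi>') (at r0)"
    unfolding \<psi>_def[abs_def] \<psi>'_def
    using DERIV_divide[OF DERIV_add[OF DERIV_const Ih_deriv[OF r0]] DERIV_pow[of N r0]] r0 by simp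
  have "laplace_beltrami h (\<lambda>x. Ff h m T (norm x)) z = (1 / volf h z) * (norm z * \<psi>' + real CARD('n) * \<psi> (norm z))"
  proof (rule LB_radial[OF z(1) A])
    fix y :: "real^'n" assume y: "y \<in> A"
    have hy: "h (norm y) > 0" using hp[of "norm y"] yA[OF y] by simp
    show "h (norm y) \<noteq> 0" using hy by simp
    show "(Ff h m T has_real_derivative qf h m (norm y)) (at (norm y))" using Ff_deriv yA[OF y] by simp
    show "\<psi> (norm y) = volf h y * qf h m (norm y) / norm y"
      unfolding \<psi>_def volf_def qf_def N_def[symmetric] m_def[symmetric] using hy yA[OF y]
      by (subst NS) (simp add: power_Suc power_divide field_simps)
  qed (use d r0_def in simp)
  also have "\<dots> = 1"
  proof -
    have hr: "h r0 > 0" using hp[of r0] r0 by simp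
    have v: "volf h z = h r0 ^ m / r0 ^ m" by (simp add: volf_def r0_def N_def m_def power_divide)
    show ?thesis
      unfolding v r0_def[symmetric] \<psi>'_def \<psi>_def N_def[symmetric] using hr r0
      by (subst NS)+ (simp add: field_simps power_Suc)
  qed
  finally show ?thesis by (simp add: m_def N_def)
qed


lemma radial_facts:
  fixes y :: "real^'n"
  assumes y: "y \<noteq> 0" "norm y < T"
    and fd: "\<And>r. 0 < r \<Longrightarrow> r < T \<Longrightarrow> (f has_real_derivative f1 r) (at r)"
    and f1d: "\<And>r. 0 < r \<Longrightarrow> r < T \<Longrightarrow> f1 differentiable (at r)"
  shows "(\<lambda>x. f (norm x)) differentiable (at y)" "egrad (\<lambda>x. f (norm x)) differentiable (at y)"
    "isCont (\<lambda>x. f (norm x)) y"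
proof -
  have "((\<lambda>x. f (norm x)) has_derivative (\<lambda>v. f1 (norm y) * (v \<bullet> sgn y))) (at y)"
    using radial_has_derivative[OF y(1) fd] y by simp
  then show 1: "(\<lambda>x. f (norm x)) differentiable (at y)" by (auto simp: differentiable_def)
  then show "isCont (\<lambda>x. f (norm x)) y" using differentiable_imp_continuous_within by blast
  define A where "A = ball y (norm y) \<inter> ball (0::real^'n) T"
  have A: "open A" "y \<in> A" "0 \<notin> A" using y by (auto simp: A_def dist_norm)
  have yA: "0 < norm x" "norm x < T" if "x \<in> A" for x
    using that by (auto simp: A_def dist_norm)
  show "egrad (\<lambda>x. f (norm x)) differentiable (at y)"
    by (rule egrad_radial_diff[OF y(1) A, of f f1]) (use fd f1d yA y in auto)
qed

lemma Hn_facts: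
  fixes y :: "real^'n"
  assumes y: "y \<noteq> 0" "norm y < T"
  shows "(\<lambda>x. Hf h (norm x)) differentiable (at y)" "egrad (\<lambda>x. Hf h (norm x)) differentiable (at y)"
    "isCont (\<lambda>x. Hf h (norm x)) y"
  using radial_facts[OF y, of "Hf h" h] Hf_deriv hd by auto

lemma Fn_facts:
  fixes y :: "real^'n"
  assumes y: "y \<noteq> 0" "norm y < T"
  shows "(\<lambda>x. Ff h m T (norm x)) differentiable (at y)" "egrad (\<lambda>x. Ff h m T (norm x)) differentiable (at y)"
    "isCont (\<lambda>x. Ff h m T (norm x)) y"
  using radial_facts[OF y, of "Ff h m T" "qf h m"] Ff_deriv qf_diff by auto


lemma max_principle:
  fixes \<Omega> :: "(real^'n) set" and w :: "real^'n \<Rightarrow> real"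
  assumes Om: "open \<Omega>" "bounded \<Omega>" "0 \<in> \<Omega>" and inT: "\<forall>x\<in>closure \<Omega>. norm x < T"
    and small: "\<exists>d>0. \<forall>t. 0 < t \<and> t < d \<longrightarrow> h t \<le> 2 * t" and dim: "CARD('n) \<ge> 2"
    and wc: "continuous_on (closure \<Omega>) w" and wd: "\<forall>y\<in>\<Omega>-{0}. w differentiable (at y)"
    and wg: "\<forall>z\<in>\<Omega>-{0}. egrad w differentiable (at z)"
    and wL: "\<forall>z\<in>\<Omega>-{0}. laplace_beltrami h w z \<ge> 0"
    and bd: "\<forall>y\<in>frontier \<Omega>. w y \<le> M"
  shows "\<forall>x\<in>closure \<Omega>. w x \<le> M"
proof -
  define m where "m = CARD('n) - 1"
  define Fn where "Fn = (\<lambda>x::real^'n. Ff h m T (norm x))"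
  have m1: "m \<ge> 1" using dim by (simp add: m_def)
  have frO: "frontier \<Omega> = closure \<Omega> - \<Omega>" using Om(1) by (simp add: frontier_def interior_open)
  have Fnf: "Fn differentiable (at y)" "egrad Fn differentiable (at y)" "isCont Fn y"
    if "y \<noteq> 0" "norm y < T" for y
    using Fn_facts[OF that, of m] unfolding Fn_def by auto
  have LBF: "laplace_beltrami h Fn z = 1" if "z \<noteq> 0" "norm z < T" for z
    using LB_Ff[OF that] unfolding Fn_def m_def .
  have cc: "compact (closure \<Omega>)" using Om(2) compact_closure by blast
  obtain Bw where Bw: "\<And>x. x \<in> closure \<Omega> \<Longrightarrow> \<bar>w x\<bar> \<le> Bw"
    using compact_imp_bounded[OF compact_continuous_image[OF wc cc]] by (auto simp: bounded_iff)
  have fr0: "0 \<notin> frontier \<Omega>" using Om(3) frO by auto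
  have frT: "norm y < T" if "y \<in> frontier \<Omega>" for y using inT that frO by auto
  have "continuous_on (frontier \<Omega>) Fn"
    using Fnf(3) fr0 frT by (intro continuous_at_imp_continuous_on) (metis)
  then have "bounded (Fn ` frontier \<Omega>)"
    using compact_imp_bounded[OF compact_continuous_image[OF _ compact_frontier_bounded[OF Om(2)]]] by blast
  then obtain Fb where Fb: "\<And>y. y \<in> frontier \<Omega> \<Longrightarrow> \<bar>Fn y\<bar> \<le> Fb"
    by (auto simp: bounded_iff)
  have main: "w x \<le> M + e * (Fb - Fn x)" if x: "x \<in> \<Omega>" "x \<noteq> 0" and e: "e > 0" for x e
  proof -
    define W where "W = (\<lambda>y. 1 * w y + e * Fn y)"
    obtain d where d: "d > 0" "\<And>r. 0 < r \<Longrightarrow> r < d \<Longrightarrow> Ff h m T r < (W x - Bw) / e"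
      using Ff_to_minf[OF m1 small, of "(W x - Bw) / e"] by blast
    have small_lt: "W y < W x" if "y \<in> closure \<Omega>" "y \<noteq> 0" "norm y < d" for y
    proof -
      have "Fn y < (W x - Bw) / e" using d(2)[of "norm y"] that by (simp add: Fn_def)
      then have "e * Fn y < W x - Bw" using e by (simp add: field_simps)
      moreover have "w y \<le> Bw" using Bw[OF that(1)] by simp
      ultimately show ?thesis by (simp add: W_def)
    qed
    define K where "K = closure \<Omega> \<inter> {y. d \<le> norm y}"
    have xK: "x \<in> K"
    proof -
      have "x \<in> closure \<Omega>" using x closure_subset by blast
      moreover have "d \<le> norm x" using small_lt[of x] x \<open>x \<in> closure \<Omega>\<close> by force
      ultimately show ?thesis by (simp add: K_def)
    qed
    have Kc: "compact K"
    proof -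
      have "closed {y::real^'n. d \<le> norm y}" by (intro closed_Collect_le continuous_intros)
      then have "closed K" unfolding K_def by (intro closed_Int) auto
      moreover have "bounded K" unfolding K_def using cc compact_imp_bounded bounded_subset by blast
      ultimately show ?thesis using compact_eq_bounded_closed by blast
    qed
    have K0: "y \<noteq> 0" "norm y < T" if "y \<in> K" for y using that d inT by (auto simp: K_def)
    have "continuous_on K W"
    proof -
      have "continuous_on K w" using wc by (rule continuous_on_subset) (auto simp: K_def)
      moreover have "continuous_on K Fn" using Fnf(3) K0 by (intro continuous_at_imp_continuous_on) blast
      ultimately show ?thesis unfolding W_def by (intro continuous_intros)
    qed
    then obtain z where z: "z \<in> K" "\<And>y. y \<in> K \<Longrightarrow> W y \<le> W z"
      using continuous_attains_sup[OF Kc _] xK by blast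
    have glob: "W y \<le> W z" if "y \<in> closure \<Omega>" "y \<noteq> 0" for y
    proof (cases "d \<le> norm y")
      case True then show ?thesis using z(2) that by (simp add: K_def)
    next
      case False then show ?thesis using small_lt[OF that] z(2)[OF xK] by simp
    qed
    have zc: "z \<in> closure \<Omega>" using z by (simp add: K_def)
    have "z \<notin> \<Omega>"
    proof
      assume zO: "z \<in> \<Omega>"
      have z0: "z \<noteq> 0" "norm z < T" using K0 z(1) by auto
      define A where "A = \<Omega> - {0}"
      have A: "open A" "z \<in> A" using Om(1) zO z0 by (auto simp: A_def)
      have AT: "y \<noteq> 0" "norm y < T" if "y \<in> A" for y using that inT closure_subset by (auto simp: A_def)
      have Ad: "w differentiable (at y)" "Fn differentiable (at y)" if "y \<in> A" for y
        using wd Fnf(1) AT that by (auto simp: A_def)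
      have Wd: "W differentiable (at y)" if "y \<in> A" for y
        unfolding W_def using Ad[OF that] by (intro derivative_intros) auto
      have "(\<lambda>y. 1 *\<^sub>R egrad w y + e *\<^sub>R egrad Fn y) differentiable (at z)"
        using wg Fnf(2)[OF z0] zO z0 by (intro derivative_intros) auto
      then obtain Dg where Dg: "((\<lambda>y. 1 *\<^sub>R egrad w y + e *\<^sub>R egrad Fn y) has_derivative Dg) (at z)"
        by (auto simp: differentiable_def)
      have "(egrad W has_derivative Dg) (at z)"
      proof (rule has_derivative_transform_within_open[OF Dg A])
        fix y assume "y \<in> A"
        then show "1 *\<^sub>R egrad w y + e *\<^sub>R egrad Fn y = egrad W y"
          unfolding W_def using egrad_lin[OF Ad, of y 1 e] by simp
      qed
      moreover have "\<And>y. y \<in> A \<Longrightarrow> W y \<le> W z" using glob closure_subset by (auto simp: A_def)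
      moreover have hz: "h differentiable (at (norm z))" "h (norm z) > 0" using hd hp z0 by auto
      ultimately have le: "laplace_beltrami h W z \<le> 0"
        using LB_max[OF z0(1) A Wd] by blast
      have "laplace_beltrami h W z = 1 * laplace_beltrami h w z + e * laplace_beltrami h Fn z"
        unfolding W_def
        by (rule LB_lin[OF z0(1) A Ad(1) Ad(2)]) (use wg zO z0 Fnf(2)[OF z0] hz in auto)
      also have "\<dots> \<ge> e" using wL zO z0 LBF[OF z0] by simp
      finally show False using le e by simp
    qed
    then have zf: "z \<in> frontier \<Omega>" using zc frO by simp
    have "W x \<le> W z" using z(2) xK by simp
    also have "W z \<le> M + e * Fb" using bd zf Fb[OF zf] e unfolding W_def
      by (simp add: add_mono mult_left_mono)
    finally show ?thesis unfolding W_def by (simp add: algebra_simps)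
  qed
  have inner: "w x \<le> M" if x: "x \<in> \<Omega>" "x \<noteq> 0" for x
  proof (rule ccontr)
    assume "\<not> w x \<le> M"
    then have gt: "w x > M" by simp
    show False
    proof (cases "Fb - Fn x \<le> 0")
      case True then show False using main[OF x, of 1] gt by simp
    next
      case False
      define e where "e = (w x - M) / (2 * (Fb - Fn x))"
      have e: "e > 0" using False gt by (simp add: e_def)
      have "e * (Fb - Fn x) = (w x - M) / 2"
      proof -
        define c where "c = Fb - Fn x"
        have "c \<noteq> 0" using False by (simp add: c_def)
        then show ?thesis unfolding e_def c_def[symmetric] by simp
      qed
      then show False using main[OF x e] gt by simp
    qed
  qed
  show ?thesis
  proof
    fix x assume xc: "x \<in> closure \<Omega>"
    show "w x \<le> M"
    proof (cases "x \<in> \<Omega>")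
      case False then show ?thesis using bd xc frO by auto
    next
      case True
      show ?thesis
      proof (cases "x = 0")
        case False then show ?thesis using inner True by simp
      next
        case x0: True
        have "0 \<in> closure (\<Omega> - {0})"
          using not_trivial_limit_within[of 0 \<Omega>] at_within_open[OF Om(3,1)] by simp
        moreover have "continuous_on (closure (\<Omega> - {0})) w"
          using wc by (rule continuous_on_subset) (simp add: closure_mono)
        ultimately show ?thesis using continuous_le_on_closure[of "\<Omega> - {0}" w 0 M] inner x0 by auto
      qed
    qed
  qed
qed


lemma Hf_cont: "continuous_on {0..T} (Hf h)"
  unfolding Hf_def[abs_def]
  by (rule indefinite_integral_continuous_1) (intro integrable_continuous_real hc)

lemma boundary_radial:
  fixes \<Omega> :: "(real^'n) set" and u :: "real^'n \<Rightarrow> real" and G :: "real^'n \<Rightarrow> real^'n"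
  assumes p: "p \<in> closure \<Omega>" "p \<noteq> 0" "norm p < T"
    and seg: "\<exists>d>0. \<forall>t. 0 < t \<and> t < d \<longrightarrow> p - t *\<^sub>R (p /\<^sub>R norm p) \<in> \<Omega>"
    and uc: "continuous_on (closure \<Omega>) u" and Gc: "continuous_on (closure \<Omega>) G"
    and Gu: "\<forall>x\<in>\<Omega>. G x = egrad u x" and ud: "\<forall>x\<in>\<Omega>. u differentiable (at x)"
    and ext: "\<exists>d>0. \<forall>t. 0 < t \<and> t < d \<longrightarrow>
       sg * (u (p - t *\<^sub>R (p /\<^sub>R norm p)) + Hf h (norm (p - t *\<^sub>R (p /\<^sub>R norm p))))
         \<le> sg * (u p + Hf h (norm p))"
  shows "sg * (G p \<bullet> (p /\<^sub>R norm p) + h (norm p)) \<ge> 0"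
proof (rule ccontr)
  assume neg: "\<not> ?thesis"
  define r where "r = norm p"
  define e where "e = p /\<^sub>R norm p"
  have r: "0 < r" "r < T" using p by (auto simp: r_def)
  have ne: "norm (p - t *\<^sub>R e) = r - t" if "0 \<le> t" "t \<le> r" for t
  proof -
    have "p - t *\<^sub>R e = (1 - t / r) *\<^sub>R p" using r by (simp add: e_def r_def algebra_simps divide_inverse)
    then have "norm (p - t *\<^sub>R e) = \<bar>1 - t / r\<bar> * r" by (simp add: r_def)
    also have "\<dots> = r - t" using that r by (simp add: abs_of_nonneg field_simps)
    finally show ?thesis .
  qed
  obtain d1 where d1: "d1 > 0" "\<And>t. 0 < t \<Longrightarrow> t < d1 \<Longrightarrow> p - t *\<^sub>R e \<in> \<Omega>"
    using seg by (auto simp: e_def)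
  obtain d2 where d2: "d2 > 0" "\<And>t. 0 < t \<Longrightarrow> t < d2 \<Longrightarrow>
       sg * (u (p - t *\<^sub>R e) + Hf h (norm (p - t *\<^sub>R e))) \<le> sg * (u p + Hf h (norm p))"
    using ext by (auto simp: e_def)
  define g where "g t = G (p - t *\<^sub>R e) \<bullet> e + h (r - t)" for t
  have "((\<lambda>t. p - t *\<^sub>R e) \<longlongrightarrow> p) (at_right 0)"
    by (auto intro!: tendsto_eq_intros)
  moreover have "\<forall>\<^sub>F t in at_right 0. p - t *\<^sub>R e \<in> closure \<Omega>"
    unfolding eventually_at_right_field using d1 closure_subset by blast
  ultimately have "((\<lambda>t. G (p - t *\<^sub>R e)) \<longlongrightarrow> G p) (at_right 0)"
    using continuous_on_tendsto_compose[OF Gc _ p(1)] by blast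
  moreover have "((\<lambda>t. h (r - t)) \<longlongrightarrow> h r) (at_right 0)"
  proof -
    have "isCont h r" using hd[OF r] differentiable_imp_continuous_within by blast
    moreover have "((\<lambda>t. r - t) \<longlongrightarrow> r) (at_right (0::real))" by (auto intro!: tendsto_eq_intros)
    ultimately show ?thesis using isCont_tendsto_compose by blast
  qed
  ultimately have "((\<lambda>t. sg * g t) \<longlongrightarrow> sg * (G p \<bullet> e + h r)) (at_right 0)"
    unfolding g_def by (intro tendsto_intros) auto
  moreover have "sg * (G p \<bullet> e + h r) < 0" using neg by (simp add: e_def r_def)
  ultimately have "\<forall>\<^sub>F t in at_right 0. sg * g t < 0" by (rule order_tendstoD)
  then obtain b where b: "b > 0" "\<And>t. 0 < t \<Longrightarrow> t < b \<Longrightarrow> sg * g t < 0"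
    unfolding eventually_at_right_field by auto
  define t0 where "t0 = min (min b d1) (min d2 r) / 2"
  have t0: "0 < t0" "t0 < b" "t0 < d1" "t0 < d2" "t0 < r" using b d1 d2 r by (auto simp: t0_def)
  define f where "f s = sg * (u (p - s *\<^sub>R e) + Hf h (r - s))" for s
  have "continuous_on {0..t0} f"
  proof -
    have "continuous_on {0..t0} (\<lambda>s. u (p - s *\<^sub>R e))"
    proof (rule continuous_on_compose2[OF uc])
      show "continuous_on {0..t0} (\<lambda>s. p - s *\<^sub>R e)" by (intro continuous_intros)
      show "(\<lambda>s. p - s *\<^sub>R e) ` {0..t0} \<subseteq> closure \<Omega>"
      proof
        fix y assume "y \<in> (\<lambda>s. p - s *\<^sub>R e) ` {0..t0}"
        then obtain s where s: "s \<in> {0..t0}" "y = p - s *\<^sub>R e" by blast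
        show "y \<in> closure \<Omega>"
        proof (cases "s = 0")
          case True then show ?thesis using s p by simp
        next
          case False then show ?thesis using s d1(2)[of s] t0 closure_subset by auto
        qed
      qed
    qed
    moreover have "continuous_on {0..t0} (\<lambda>s. Hf h (r - s))"
    proof (rule continuous_on_compose2[OF Hf_cont])
      show "continuous_on {0..t0} (\<lambda>s. r - s)" by (intro continuous_intros)
      show "(\<lambda>s. r - s) ` {0..t0} \<subseteq> {0..T}" using t0 r by auto
    qed
    ultimately show ?thesis unfolding f_def by (intro continuous_intros)
  qed
  moreover have "f differentiable (at s)" if "0 < s" "s < t0" for s
  proof -
    have "p - s *\<^sub>R e \<in> \<Omega>" using d1 that t0 by auto
    then have "u differentiable (at (p - s *\<^sub>R e))" using ud by blast
    moreover have "(\<lambda>s. p - s *\<^sub>R e) differentiable (at s)"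
      by (intro differentiable_diff differentiable_const differentiable_scaleR differentiable_ident)
    ultimately have "(\<lambda>s. u (p - s *\<^sub>R e)) differentiable (at s)"
      using differentiable_compose[of u "\<lambda>s. p - s *\<^sub>R e" s UNIV] by blast
    moreover have "(\<lambda>s. Hf h (r - s)) differentiable (at s)"
    proof -
      have "Hf h differentiable (at (r - s))" using Hf_deriv[of "r - s"] that t0 r
        real_differentiable_def by force
      moreover have "(\<lambda>s. r - s) differentiable (at s)"
        by (intro differentiable_diff differentiable_const differentiable_ident)
      ultimately show ?thesis using differentiable_compose[of "Hf h" "\<lambda>s. r - s" s UNIV] by blast
    qed
    ultimately show ?thesis unfolding f_def[abs_def]
      by (intro differentiable_mult differentiable_const differentiable_add)
  qed
  ultimately have "\<exists>l z. 0 < z \<and> z < t0 \<and> (f has_real_derivative l) (at z) \<and> f t0 - f 0 = (t0 - 0) * l"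
    by (intro MVT[OF t0(1)])
  then obtain l z where z: "0 < z" "z < t0" "(f has_real_derivative l) (at z)" "f t0 - f 0 = (t0 - 0) * l"
    by blast
  have "(f has_real_derivative (- sg * g z)) (at z)"
  proof -
    have zO: "p - z *\<^sub>R e \<in> \<Omega>" using d1 z t0 by auto
    have "(u has_derivative (\<lambda>v. G (p - z *\<^sub>R e) \<bullet> v)) (at (p - z *\<^sub>R e))"
      using has_derivative_egrad[of u "p - z *\<^sub>R e"] ud Gu zO by auto
    moreover have "((\<lambda>s. p - s *\<^sub>R e) has_derivative (\<lambda>s. - (s *\<^sub>R e))) (at z)"
      by (auto intro!: derivative_eq_intros)
    ultimately have du: "((\<lambda>s. u (p - s *\<^sub>R e)) has_derivative (\<lambda>s. G (p - z *\<^sub>R e) \<bullet> (- (s *\<^sub>R e)))) (at z)"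
      using has_derivative_compose[of "\<lambda>s. p - s *\<^sub>R e" "\<lambda>s. - (s *\<^sub>R e)" z UNIV u] by blast
    have rz: "0 < r - z" "r - z < T" using z t0 r by auto
    have dH: "((\<lambda>s. Hf h (r - s)) has_real_derivative h (r - z) * (0 - 1)) (at z)"
      using DERIV_chain2[OF Hf_deriv[OF rz] DERIV_diff[OF DERIV_const DERIV_ident]] by simp
    have "((\<lambda>s. u (p - s *\<^sub>R e)) has_real_derivative - (G (p - z *\<^sub>R e) \<bullet> e)) (at z)"
      using du by (rule has_derivative_imp_has_field_derivative) (simp add: mult.commute)
    from DERIV_cmult[OF DERIV_add[OF this dH], of sg] show ?thesis
      unfolding f_def[abs_def] g_def by (simp add: algebra_simps)
  qed
  then have l: "l = - sg * g z" using z(3) DERIV_unique by blast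
  have "sg * g z < 0" using b z t0 by simp
  then have "t0 * (sg * g z) < 0" using t0 by (simp add: mult_pos_neg)
  then have "f t0 > f 0" using z(4) l by simp
  moreover have "f t0 \<le> f 0"
    using d2(2)[of t0] t0 ne[of t0] by (simp add: f_def r_def)
  ultimately show False by simp
qed


end

lemma parallel_vec:
  fixes w e :: "real^'n"
  assumes e: "norm e = 1" and H: "\<And>d. d \<bullet> e < 0 \<Longrightarrow> w \<bullet> d \<le> 0"
  shows "w = (w \<bullet> e) *\<^sub>R e" "w \<bullet> e \<ge> 0"
proof -
  have ee: "e \<bullet> e = 1" using e by (simp add: dot_square_norm)
  show "w \<bullet> e \<ge> 0" using H[of "-e"] ee by simp
  define v where "v = w - (w \<bullet> e) *\<^sub>R e"
  have ve: "v \<bullet> e = 0" using ee by (simp add: v_def inner_diff_left)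
  have wv: "w \<bullet> v = v \<bullet> v" using ve by (simp add: v_def inner_diff_left inner_diff_right inner_commute)
  have "v \<bullet> v \<le> t * (w \<bullet> e)" if "t > 0" for t
  proof -
    have "(v - t *\<^sub>R e) \<bullet> e < 0" using ve ee that by (simp add: inner_diff_left)
    then have "w \<bullet> (v - t *\<^sub>R e) \<le> 0" by (rule H)
    then show ?thesis using wv by (simp add: inner_diff_right)
  qed
  then have "v \<bullet> v \<le> 0"
  proof -
    assume a: "\<And>t. t > 0 \<Longrightarrow> v \<bullet> v \<le> t * (w \<bullet> e)"
    show "v \<bullet> v \<le> 0"
    proof (rule ccontr)
      assume "\<not> v \<bullet> v \<le> 0"
      then have vp: "v \<bullet> v > 0" by linarith
      define t where "t = (v \<bullet> v) / (2 * (w \<bullet> e + 1))"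
      have we: "w \<bullet> e \<ge> 0" using H[of "-e"] ee by simp
      have tp: "t > 0" using vp we by (simp add: t_def)
      have "t * (w \<bullet> e) < v \<bullet> v"
      proof -
        have "t * (w \<bullet> e) \<le> t * (w \<bullet> e + 1)" using tp by simp
        also have "\<dots> = (v \<bullet> v) / 2"
        proof -
          define a where "a = w \<bullet> e + 1"
          have "a \<noteq> 0" using we by (simp add: a_def)
          then show ?thesis unfolding t_def a_def[symmetric] by simp
        qed
        finally show ?thesis using vp by linarith
      qed
      then show False using a[OF tp] by simp
    qed
  qed
  then have "v \<bullet> v = 0" using inner_ge_zero[of v] by linarith
  then have "v = 0" by simp
  then show "w = (w \<bullet> e) *\<^sub>R e" by (simp add: v_def)
qed

lemma dir_deriv_sign:
  fixes \<psi> :: "real^'n \<Rightarrow> real"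
  assumes d: "(\<psi> has_derivative (\<lambda>v. Dp \<bullet> v)) (at p)" and del: "del > 0"
    and le: "\<And>t. 0 < t \<Longrightarrow> t < del \<Longrightarrow> \<psi> (p + t *\<^sub>R v) \<le> \<psi> p"
  shows "Dp \<bullet> v \<le> 0"
proof (rule ccontr)
  assume "\<not> Dp \<bullet> v \<le> 0"
  then have pos: "Dp \<bullet> v > 0" by simp
  have "((\<lambda>t::real. p + t *\<^sub>R v) has_derivative (\<lambda>t. t *\<^sub>R v)) (at 0)"
    by (auto intro!: derivative_eq_intros)
  moreover have "(\<psi> has_derivative (\<lambda>v. Dp \<bullet> v)) (at (p + 0 *\<^sub>R v))" using d by simp
  ultimately have "((\<lambda>t. \<psi> (p + t *\<^sub>R v)) has_derivative (\<lambda>t. Dp \<bullet> (t *\<^sub>R v))) (at 0)"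
    by (rule has_derivative_compose)
  then have "((\<lambda>t. \<psi> (p + t *\<^sub>R v)) has_real_derivative (Dp \<bullet> v)) (at 0)"
    by (rule has_derivative_imp_has_field_derivative) (simp add: mult.commute)
  from DERIV_pos_inc_right[OF this pos] obtain d' where d': "d' > 0"
    "\<And>t. t > 0 \<Longrightarrow> t < d' \<Longrightarrow> \<psi> (p + 0 *\<^sub>R v) < \<psi> (p + (0 + t) *\<^sub>R v)" by blast
  define t where "t = min d' del / 2"
  have "t > 0" "t < d'" "t < del" using d' del by (auto simp: t_def)
  then show False using d'(2)[of t] le[of t] by simp
qed

lemma normal_e:
  fixes p :: "real^'n"
  assumes p: "p \<noteq> 0" "h (norm p) \<noteq> 0" and D: "D\<psi> p = l *\<^sub>R (p /\<^sub>R norm p)" and l: "l > 0"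
  shows "outward_normal h D\<psi> p = p /\<^sub>R norm p"
proof -
  have g: "ginv h p (D\<psi> p) = l *\<^sub>R (p /\<^sub>R norm p)"
  proof -
    have "ginv h p ((l / norm p) *\<^sub>R p) = (l / norm p) *\<^sub>R p" using ginv_radial[of p h "l / norm p"] p by blast
    moreover have "D\<psi> p = (l / norm p) *\<^sub>R p" using D by (simp add: divide_inverse)
    ultimately show ?thesis by (simp add: divide_inverse)
  qed
  have n1: "(p /\<^sub>R norm p) \<bullet> (p /\<^sub>R norm p) = 1" using p by (simp add: dot_square_norm)
  have "D\<psi> p \<bullet> ginv h p (D\<psi> p) = l^2" using g D n1 by (simp add: power2_eq_square)
  then have "sqrt (D\<psi> p \<bullet> ginv h p (D\<psi> p)) = l" using l by simp
  then show ?thesis unfolding outward_normal_def using g l by simp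
qed

lemma psi_le0:
  assumes C: "C1_defining \<Omega> U \<psi> D\<psi>" and p: "p \<in> U" "p \<in> closure \<Omega>"
  shows "\<psi> p \<le> 0"
proof (rule ccontr)
  assume "\<not> \<psi> p \<le> 0"
  then have pos: "\<psi> p > 0" by simp
  have "(\<psi> has_derivative (\<lambda>v. D\<psi> p \<bullet> v)) (at p)" using C p unfolding C1_defining_def by blast
  then have "isCont \<psi> p" using has_derivative_continuous by blast
  then obtain d where d: "d > 0" "\<And>y. dist y p < d \<Longrightarrow> dist (\<psi> y) (\<psi> p) < \<psi> p"
    using pos unfolding continuous_at_eps_delta by blast
  obtain e where e: "e > 0" "ball p e \<subseteq> U" using C p unfolding C1_defining_def by (meson openE)
  obtain y where y: "y \<in> \<Omega>" "dist y p < min d e"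
    using p(2) d e unfolding closure_approachable by (metis min_less_iff_conj)
  have "y \<in> U" using y e by (auto simp: dist_commute)
  then have "\<psi> y < 0" using y C unfolding C1_defining_def by blast
  moreover have "dist (\<psi> y) (\<psi> p) < \<psi> p" using d y by simp
  ultimately show False by (simp add: dist_real_def)
qed


lemma egrad_comb_diff:
  fixes f1 f2 :: "real^'n \<Rightarrow> real"
  assumes A: "open A" "z \<in> A"
    and d1: "\<And>y. y \<in> A \<Longrightarrow> f1 differentiable (at y)"
    and d2: "\<And>y. y \<in> A \<Longrightarrow> f2 differentiable (at y)"
    and g1: "egrad f1 differentiable (at z)" and g2: "egrad f2 differentiable (at z)"
  shows "egrad (\<lambda>x. a * f1 x + b * f2 x) differentiable (at z)"
proof -
  have "(\<lambda>y. a *\<^sub>R egrad f1 y + b *\<^sub>R egrad f2 y) differentiable (at z)"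
    using g1 g2 by (intro derivative_intros) auto
  then obtain Dg where Dg: "((\<lambda>y. a *\<^sub>R egrad f1 y + b *\<^sub>R egrad f2 y) has_derivative Dg) (at z)"
    by (auto simp: differentiable_def)
  have "(egrad (\<lambda>x. a * f1 x + b * f2 x) has_derivative Dg) (at z)"
  proof (rule has_derivative_transform_within_open[OF Dg A])
    fix y assume "y \<in> A"
    then show "a *\<^sub>R egrad f1 y + b *\<^sub>R egrad f2 y = egrad (\<lambda>x. a * f1 x + b * f2 x) y"
      using egrad_lin[OF d1 d2, of y a b] by simp
  qed
  then show ?thesis by (auto simp: differentiable_def)
qed

lemma normal_from_cone:
  fixes p :: "real^'n"
  assumes C: "C1_defining \<Omega> U \<psi> D\<psi>" and p: "p \<in> U" "p \<noteq> 0" "h (norm p) \<noteq> 0"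
    and cone: "\<And>d. d \<bullet> p < 0 \<Longrightarrow> D\<psi> p \<bullet> d \<le> 0"
  shows "outward_normal h D\<psi> p = p /\<^sub>R norm p"
    "D\<psi> p = (D\<psi> p \<bullet> (p /\<^sub>R norm p)) *\<^sub>R (p /\<^sub>R norm p)" "D\<psi> p \<bullet> (p /\<^sub>R norm p) > 0"
proof -
  define e where "e = p /\<^sub>R norm p"
  have e1: "norm e = 1" using p by (simp add: e_def)
  have H: "D\<psi> p \<bullet> d \<le> 0" if "d \<bullet> e < 0" for d
  proof -
    have "d \<bullet> p = norm p * (d \<bullet> e)" using p by (simp add: e_def)
    then have "d \<bullet> p < 0" using that p by (simp add: mult_pos_neg)
    then show ?thesis by (rule cone)
  qed
  have par: "D\<psi> p = (D\<psi> p \<bullet> e) *\<^sub>R e" and ge: "D\<psi> p \<bullet> e \<ge> 0"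
    using parallel_vec[OF e1 H] by auto
  have "D\<psi> p \<noteq> 0" using C p unfolding C1_defining_def by blast
  then have "D\<psi> p \<bullet> e \<noteq> 0" using par by (metis scaleR_zero_left)
  then have pos: "D\<psi> p \<bullet> e > 0" using ge by simp
  show "outward_normal h D\<psi> p = p /\<^sub>R norm p"
    using normal_e[of p h D\<psi> "D\<psi> p \<bullet> e"] p pos par by (simp add: e_def)
  show "D\<psi> p = (D\<psi> p \<bullet> (p /\<^sub>R norm p)) *\<^sub>R (p /\<^sub>R norm p)" using par by (simp add: e_def)
  show "D\<psi> p \<bullet> (p /\<^sub>R norm p) > 0" using pos by (simp add: e_def)
qed


lemma dir_deriv_1d:
  fixes \<psi> :: "real^'n \<Rightarrow> real"
  assumes d: "(\<psi> has_derivative (\<lambda>v. Dp \<bullet> v)) (at p)"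
  shows "((\<lambda>t. \<psi> (p + t *\<^sub>R v)) has_real_derivative (Dp \<bullet> v)) (at 0)"
proof -
  have "((\<lambda>t::real. p + t *\<^sub>R v) has_derivative (\<lambda>t. t *\<^sub>R v)) (at 0)"
    by (auto intro!: derivative_eq_intros)
  moreover have "(\<psi> has_derivative (\<lambda>v. Dp \<bullet> v)) (at (p + 0 *\<^sub>R v))" using d by simp
  ultimately have "((\<lambda>t. \<psi> (p + t *\<^sub>R v)) has_derivative (\<lambda>t. Dp \<bullet> (t *\<^sub>R v))) (at 0)"
    by (rule has_derivative_compose)
  then show ?thesis
    by (rule has_derivative_imp_has_field_derivative) (simp add: mult.commute)
qed

lemma norm_seg:
  fixes p :: "real^'n"
  assumes "p \<noteq> 0" "0 \<le> t" "t \<le> norm p"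
  shows "norm (p - t *\<^sub>R (p /\<^sub>R norm p)) = norm p - t"
proof -
  define r where "r = norm p"
  have r: "r > 0" using assms by (simp add: r_def)
  have "p - t *\<^sub>R (p /\<^sub>R norm p) = (1 - t / r) *\<^sub>R p" using r by (simp add: r_def algebra_simps divide_inverse)
  then have "norm (p - t *\<^sub>R (p /\<^sub>R norm p)) = \<bar>1 - t / r\<bar> * r" by (simp add: r_def)
  also have "\<dots> = r - t" using assms r by (simp add: abs_of_nonneg field_simps r_def)
  finally show ?thesis by (simp add: r_def)
qed




theorem corollary2p7:
  fixes S :: ereal and h :: "real \<Rightarrow> real" and D :: "nat \<Rightarrow> real \<Rightarrow> real"
    and \<Omega> :: "(real^'n) set" and u :: "real^'n \<Rightarrow> real" and G :: "real^'n \<Rightarrow> real^'n"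
    and \<phi> d\<phi> :: "real \<Rightarrow> real" and R0 R \<kappa>0 :: real
  assumes dim: "CARD('n) \<ge> 2"
    and S_pos: "S > 0"
    and h_smooth: "smooth_profile S h D"
    and h_pos: "\<forall>r. 0 < r \<and> ereal r < S \<longrightarrow> h r > 0"
    and h_d1: "D 1 0 = 1"
    and h_even: "\<forall>k. D (2 * k) 0 = 0"
    and dom: "C1_domain \<Omega>"
    and bdd: "bounded \<Omega>" "closure \<Omega> \<subseteq> model_space S"
    and pole: "0 \<in> \<Omega>"
    and R_int: "0 < R0" "R0 \<le> R" "ereal R < S"
    and h_decr: "\<forall>r. R0 < r \<and> r < R \<longrightarrow> deriv h r < 0"
    and R12: "{Inf (norm ` frontier \<Omega>)<..<Sup (norm ` frontier \<Omega>)} \<subseteq> {R0<..<R}"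
    and phi_C1: "continuous_on {R0..R} d\<phi>"
      "\<forall>r\<in>{R0..R}. (\<phi> has_real_derivative d\<phi> r) (at r within {R0..R})"
    and phi_ge: "\<forall>r\<in>{R0..R}. d\<phi> r \<ge> - h r"
    and u_C2: "C2_on \<Omega> u"
    and u_C1bar: "continuous_on (closure \<Omega>) u" "continuous_on (closure \<Omega>) G"
      "\<forall>x\<in>\<Omega>. G x = egrad u x"
    and pde: "\<forall>x\<in>\<Omega> - {0}. - laplace_beltrami h u x = real CARD('n) * deriv h (norm x)"
    and dirichlet: "\<forall>x\<in>frontier \<Omega>. u x = \<phi> (norm x)"
    and neumann: "\<forall>p\<in>frontier \<Omega>. \<forall>U \<psi> D\<psi>. p \<in> U \<and> C1_defining \<Omega> U \<psi> D\<psi> \<longrightarrow>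
                    G p \<bullet> outward_normal h D\<psi> p = \<kappa>0"
  shows "(\<exists>f. \<forall>x\<in>closure \<Omega>. u x = f (norm x)) \<and> (\<exists>\<rho>>0. \<Omega> = ball 0 \<rho>)"
proof -
  define U0 where "U0 = {t::real. 0 \<le> t \<and> ereal t < S}"
  have hD0: "D 0 r = h r" if "r \<in> U0" for r
    using h_smooth that unfolding smooth_profile_def U0_def by blast
  have hw: "(h has_real_derivative D 1 r) (at r within U0)" if r: "r \<in> U0" for r
  proof -
    have "(D 0 has_real_derivative D (Suc 0) r) (at r within U0)"
      using h_smooth r unfolding smooth_profile_def U0_def by blast
    then have "(D 0 has_real_derivative D 1 r) (at r within U0)" by simp
    then show ?thesis
      by (rule has_field_derivative_transform_within[where d=1]) (use r hD0 in auto)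
  qed
  have hat: "(h has_real_derivative D 1 r) (at r)" if r: "0 < r" "ereal r < S" for r
  proof -
    obtain T' where T': "r < T'" "ereal T' < S" using ereal_dense2[OF r(2)] by (auto)
    have sub: "{0<..<T'} \<subseteq> U0"
    proof
      fix t assume t: "t \<in> {0<..<T'}"
      then have "ereal t < ereal T'" by simp
      then have "ereal t < S" using T'(2) by (rule order.strict_trans)
      then show "t \<in> U0" using t by (simp add: U0_def)
    qed
    have "at r within U0 = at r"
      by (rule at_within_open_subset[of r "{0<..<T'}"]) (use r T' sub in auto)
    then show ?thesis using hw[of r] r by (simp add: U0_def)
  qed
  have h0: "h 0 = 0"
  proof -
    have "0 \<in> U0" using S_pos by (simp add: U0_def zero_ereal_def)
    then show ?thesis using hD0[of 0] h_even[rule_format, of 0] by simp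
  qed
  have small: "\<exists>d>0. \<forall>t. 0 < t \<and> t < d \<longrightarrow> h t \<le> 2 * t"
  proof -
    have "0 \<in> U0" using S_pos by (simp add: U0_def zero_ereal_def)
    then have "((\<lambda>y. (h y - h 0) / (y - 0)) \<longlongrightarrow> 1) (at 0 within U0)"
      using hw[of 0] h_d1 by (simp add: has_field_derivative_iff)
    then have "\<forall>\<^sub>F y in at 0 within U0. (h y - h 0) / (y - 0) < 2"
      by (rule order_tendstoD) simp
    then obtain d where d: "d > 0" "\<And>y. y \<in> U0 \<Longrightarrow> y \<noteq> 0 \<Longrightarrow> dist y 0 < d \<Longrightarrow> h y / y < 2"
      unfolding eventually_at using h0 by auto
    obtain T1 where T1: "0 < T1" "ereal T1 < S" using ereal_dense2[OF S_pos] by (auto simp: zero_ereal_def)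
    have "h t \<le> 2 * t" if t: "0 < t" "t < min d T1" for t
    proof -
      have "ereal t < ereal T1" using t by simp
      then have "ereal t < S" using T1(2) by (rule order.strict_trans)
      then have "t \<in> U0" using t by (simp add: U0_def)
      then have "h t / t < 2" using d(2)[of t] t by simp
      then show ?thesis using t by (simp add: field_simps)
    qed
    moreover have "min d T1 > 0" using d T1 by simp
    ultimately show ?thesis by blast
  qed
  have cc: "compact (closure \<Omega>)" using bdd(1) compact_closure by blast
  have "closure \<Omega> \<noteq> {}" using pole closure_subset by blast
  then have "\<exists>x\<in>closure \<Omega>. \<forall>y\<in>closure \<Omega>. norm y \<le> norm x"
    by (intro continuous_attains_sup[OF cc]) (auto intro: continuous_intros)
  then obtain p0 where p0: "p0 \<in> closure \<Omega>" "\<And>x. x \<in> closure \<Omega> \<Longrightarrow> norm x \<le> norm p0"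
    by blast
  have p0S: "ereal (norm p0) < S" using p0(1) bdd(2) by (auto simp: model_space_def)
  have "ereal (max (norm p0) R) < S" using p0S R_int(3) by (simp add: max_def)
  then obtain T0 where T0: "ereal (max (norm p0) R) < ereal T0" "ereal T0 < S" using ereal_dense2 by blast
  define T where "T = T0"
  have T: "max (norm p0) R < T" "ereal T < S" using T0 by (auto simp: T_def)
  have TS: "ereal r < S" if "r \<le> T" for r
  proof -
    have "ereal r \<le> ereal T" using that by simp
    then show ?thesis using T(2) by (rule order.strict_trans1)
  qed
  have Tpos: "0 < T" using T(1) norm_ge_zero[of p0] by linarith
  have inT: "\<forall>x\<in>closure \<Omega>. norm x < T" using p0(2) T(1) by force
  have RT: "R < T" using T(1) by simp
  have hc: "continuous_on {0..T} h"
  proof -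
    have "continuous (at r within {0..T}) h" if "r \<in> {0..T}" for r
    proof -
      have rU: "r \<in> U0" using that TS by (simp add: U0_def)
      have "continuous (at r within U0) h" using DERIV_continuous[OF hw[OF rU]] .
      moreover have "{0..T} \<subseteq> U0" using TS by (auto simp: U0_def)
      ultimately show ?thesis using continuous_within_subset by blast
    qed
    then show ?thesis using continuous_on_eq_continuous_within by blast
  qed
  have hd: "\<And>r. 0 < r \<Longrightarrow> r < T \<Longrightarrow> h differentiable (at r)"
    using hat TS real_differentiable_def by (meson less_imp_le)
  have hp: "\<And>r. 0 < r \<Longrightarrow> r \<le> T \<Longrightarrow> h r > 0" using h_pos TS by blast
  have dh: "deriv h r = D 1 r" if "0 < r" "r < T" for r
    using hat[of r] that TS DERIV_imp_deriv by (meson less_imp_le)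
  note ctx = Tpos hc hd hp h0
  have frO: "frontier \<Omega> = closure \<Omega> - \<Omega>"
    using dom by (simp add: C1_domain_def frontier_def interior_open)
  have Oopen: "open \<Omega>" and Ocon: "connected \<Omega>" using dom by (auto simp: C1_domain_def)
  have fne: "frontier \<Omega> \<noteq> {}"
  proof
    assume "frontier \<Omega> = {}"
    then have "\<Omega> = {} \<or> \<Omega> = UNIV" using frontier_eq_empty by blast
    then show False using pole bdd(1) by auto
  qed
  have fc: "compact (frontier \<Omega>)" using compact_frontier_bounded[OF bdd(1)] .
  obtain p1 where p1: "p1 \<in> frontier \<Omega>" "\<And>y. y \<in> frontier \<Omega> \<Longrightarrow> norm p1 \<le> norm y"
    using continuous_attains_inf[OF fc fne, of norm] by (auto intro: continuous_intros)
  obtain p2 where p2: "p2 \<in> frontier \<Omega>" "\<And>y. y \<in> frontier \<Omega> \<Longrightarrow> norm y \<le> norm p2"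
    using continuous_attains_sup[OF fc fne, of norm] by (auto intro: continuous_intros)
  define R1 where "R1 = norm p1"
  define R2 where "R2 = norm p2"
  have InfR1: "Inf (norm ` frontier \<Omega>) = R1" unfolding R1_def using p1 by (intro cInf_eq_minimum) auto
  have SupR2: "Sup (norm ` frontier \<Omega>) = R2" unfolding R2_def using p2 by (intro cSup_eq_maximum) auto
  have p1c: "p1 \<in> closure \<Omega>" "p1 \<notin> \<Omega>" using p1 frO by auto
  have p2c: "p2 \<in> closure \<Omega>" "p2 \<notin> \<Omega>" using p2 frO by auto
  have p10: "p1 \<noteq> 0" using p1c pole by auto
  have R1pos: "R1 > 0" using p10 by (simp add: R1_def)
  have R1le2: "R1 \<le> R2" using p1(2)[OF p2(1)] by (simp add: R1_def R2_def)
  have p20: "p2 \<noteq> 0" using R1pos R1le2 by (auto simp: R2_def)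
  have ballsub: "ball 0 R1 \<subseteq> \<Omega>"
  proof (rule ccontr)
    assume "\<not> ball 0 R1 \<subseteq> \<Omega>"
    then have "ball 0 R1 - \<Omega> \<noteq> {}" by blast
    moreover have "0 \<in> ball 0 R1 \<inter> \<Omega>" using pole R1pos by auto
    then have "ball 0 R1 \<inter> \<Omega> \<noteq> {}" by blast
    ultimately have "ball 0 R1 \<inter> frontier \<Omega> \<noteq> {}"
      using connected_Int_frontier[of "ball 0 R1" \<Omega>] by auto
    then obtain y where "y \<in> frontier \<Omega>" "norm y < R1" by auto
    then show False using p1(2) by (force simp: R1_def)
  qed
  have cballsup: "\<Omega> \<subseteq> cball 0 R2"
  proof (rule ccontr)
    assume "\<not> \<Omega> \<subseteq> cball 0 R2"
    then have ne1: "(- cball 0 R2) \<inter> \<Omega> \<noteq> {}" by blast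
    obtain B where B: "\<And>x. x \<in> \<Omega> \<Longrightarrow> norm x \<le> B" using bdd(1) by (auto simp: bounded_iff)
    obtain i :: 'n where True by blast
    define y :: "real^'n" where "y = (max B R2 + 1) *\<^sub>R axis i 1"
    have "max B R2 + 1 > 0" using R1pos R1le2 by linarith
    then have ny: "norm y = max B R2 + 1" by (simp add: y_def)
    then have "y \<in> (- cball 0 R2) - \<Omega>" using B[of y] by auto
    then have ne2: "(- cball 0 R2) - \<Omega> \<noteq> {}" by blast
    have "connected (- cball (0::real^'n) R2)"
      by (rule connected_complement_bounded_convex) (use dim in auto)
    then have "(- cball 0 R2) \<inter> frontier \<Omega> \<noteq> {}"
      using connected_Int_frontier ne1 ne2 by blast
    then obtain z where "z \<in> frontier \<Omega>" "norm z > R2" by (auto simp: not_le)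
    then show False using p2(2) by (force simp: R2_def)
  qed
  have closub: "closure \<Omega> \<subseteq> cball 0 R2" using closure_minimal[OF cballsup closed_cball] .
  define e1 where "e1 = p1 /\<^sub>R norm p1"
  define e2 where "e2 = p2 /\<^sub>R norm p2"
  obtain U1 \<psi>1 D\<psi>1 where U1: "p1 \<in> U1" "C1_defining \<Omega> U1 \<psi>1 D\<psi>1" using dom p1(1) unfolding C1_domain_def by blast
  obtain U2 \<psi>2 D\<psi>2 where U2: "p2 \<in> U2" "C1_defining \<Omega> U2 \<psi>2 D\<psi>2" using dom p2(1) unfolding C1_domain_def by blast
  have U1o: "open U1" and U1eq: "\<Omega> \<inter> U1 = {x\<in>U1. \<psi>1 x < 0}"
    and d\<psi>1: "(\<psi>1 has_derivative (\<lambda>v. D\<psi>1 p1 \<bullet> v)) (at p1)"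
    using U1 unfolding C1_defining_def by auto
  have U2o: "open U2" and U2eq: "\<Omega> \<inter> U2 = {x\<in>U2. \<psi>2 x < 0}"
    and d\<psi>2: "(\<psi>2 has_derivative (\<lambda>v. D\<psi>2 p2 \<bullet> v)) (at p2)"
    using U2 unfolding C1_defining_def by auto
  have hR1: "h (norm p1) \<noteq> 0" using hp[of "norm p1"] p10 inT p1c by fastforce
  have hR2: "h (norm p2) \<noteq> 0" using hp[of "norm p2"] p20 inT p2c by fastforce
  have \<psi>1p: "\<psi>1 p1 \<ge> 0"
  proof (rule ccontr)
    assume "\<not> \<psi>1 p1 \<ge> 0"
    then have "p1 \<in> {x\<in>U1. \<psi>1 x < 0}" using U1(1) by simp
    then show False using U1eq p1c(2) by blast
  qed
  have \<psi>2p: "\<psi>2 p2 = 0"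
  proof -
    have "\<psi>2 p2 \<ge> 0"
    proof (rule ccontr)
      assume "\<not> \<psi>2 p2 \<ge> 0"
      then have "p2 \<in> {x\<in>U2. \<psi>2 x < 0}" using U2(1) by simp
      then show False using U2eq p2c(2) by blast
    qed
    moreover have "\<psi>2 p2 \<le> 0" using psi_le0[OF U2(2) U2(1) p2c(1)] .
    ultimately show ?thesis by simp
  qed
  have cone1: "D\<psi>1 p1 \<bullet> d \<le> 0" if dp: "d \<bullet> p1 < 0" for d
  proof -
    obtain ep where ep: "ep > 0" "ball p1 ep \<subseteq> U1" using U1o U1(1) openE by blast
    define del where "del = min (ep / (norm d + 1)) (- (d \<bullet> p1) / (d \<bullet> d + 1))"
    have dd: "d \<bullet> d \<ge> 0" by simp
    have nd: "norm d + 1 > 0" by (simp add: add_nonneg_pos)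
    have a: "- (d \<bullet> p1) / (d \<bullet> d + 1) > 0" using dp dd by (intro divide_pos_pos) (auto simp: add_nonneg_pos)
    have b: "ep / (norm d + 1) > 0" using ep nd by simp
    have del0: "del > 0" unfolding del_def using a b by linarith
    show ?thesis
    proof (rule dir_deriv_sign[OF d\<psi>1 del0])
      fix t assume t: "0 < t" "t < del"
      have "t * (norm d + 1) < ep" using t nd by (simp add: del_def field_simps)
      then have "norm (t *\<^sub>R d) < ep" using t by (simp add: algebra_simps)
      then have inU: "p1 + t *\<^sub>R d \<in> U1" using ep by (auto simp: dist_norm)
      have "t * (d \<bullet> d + 1) < - (d \<bullet> p1)" using t dd by (simp add: del_def field_simps add_nonneg_pos)
      then have "t * (d \<bullet> d) < - (d \<bullet> p1)" using t by (smt (verit) mult_pos_pos distrib_left mult.right_neutral)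
      then have "t * (2 * (d \<bullet> p1) + t * (d \<bullet> d)) < 0"
        using t dp by (intro mult_pos_neg) (auto simp: algebra_simps)
      then have "(p1 + t *\<^sub>R d) \<bullet> (p1 + t *\<^sub>R d) < p1 \<bullet> p1"
        by (simp add: inner_add_left inner_add_right inner_commute algebra_simps power2_eq_square)
      then have "norm (p1 + t *\<^sub>R d) < norm p1"
        by (simp add: dot_square_norm power2_eq_square) (metis norm_ge_zero abs_of_nonneg abs_less_iff mult_less_cancel_left_pos linorder_not_le mult_mono power2_eq_square)
      then have "p1 + t *\<^sub>R d \<in> \<Omega>" using ballsub by (auto simp: R1_def)
      then have "\<psi>1 (p1 + t *\<^sub>R d) < 0" using inU U1eq by blast
      then show "\<psi>1 (p1 + t *\<^sub>R d) \<le> \<psi>1 p1" using \<psi>1p by simp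
    qed
  qed
  have cone2: "D\<psi>2 p2 \<bullet> d \<le> 0" if dp: "d \<bullet> p2 < 0" for d
  proof -
    obtain ep where ep: "ep > 0" "ball p2 ep \<subseteq> U2" using U2o U2(1) openE by blast
    have nd: "norm d + 1 > 0" by (simp add: add_nonneg_pos)
    define del where "del = ep / (norm d + 1)"
    have del0: "del > 0" using ep nd by (simp add: del_def)
    have dm: "((\<lambda>x. - \<psi>2 x) has_derivative (\<lambda>v. (- D\<psi>2 p2) \<bullet> v)) (at p2)"
      using d\<psi>2 by (auto intro!: derivative_eq_intros)
    have "(- D\<psi>2 p2) \<bullet> (- d) \<le> 0"
    proof (rule dir_deriv_sign[OF dm del0])
      fix t assume t: "0 < t" "t < del"
      have "t * (norm d + 1) < ep" using t nd by (simp add: del_def field_simps)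
      then have "norm (t *\<^sub>R d) < ep" using t by (simp add: algebra_simps)
      then have inU: "p2 + t *\<^sub>R (- d) \<in> U2" using ep by (auto simp: dist_norm)
      have "0 \<le> t * (d \<bullet> d)" using t by simp
      then have "0 < - 2 * (d \<bullet> p2) + t * (d \<bullet> d)" using dp by linarith
      then have "0 < t * (- 2 * (d \<bullet> p2) + t * (d \<bullet> d))"
        using t by (intro mult_pos_pos) auto
      then have "p2 \<bullet> p2 < (p2 + t *\<^sub>R (- d)) \<bullet> (p2 + t *\<^sub>R (- d))"
        by (simp add: inner_add_left inner_add_right inner_commute algebra_simps power2_eq_square)
      then have "norm p2 < norm (p2 + t *\<^sub>R (- d))"
        by (simp add: dot_square_norm) (metis norm_ge_zero power_mono not_le)
      then have "p2 + t *\<^sub>R (- d) \<notin> \<Omega>" using cballsup by (auto simp: R2_def)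
      then have "\<psi>2 (p2 + t *\<^sub>R (- d)) \<ge> 0"
      proof -
        assume nO: "p2 + t *\<^sub>R (- d) \<notin> \<Omega>"
        show ?thesis
        proof (rule ccontr)
          assume "\<not> \<psi>2 (p2 + t *\<^sub>R (- d)) \<ge> 0"
          then have "p2 + t *\<^sub>R (- d) \<in> {x\<in>U2. \<psi>2 x < 0}" using inU by simp
          then show False using U2eq nO by blast
        qed
      qed
      then show "- \<psi>2 (p2 + t *\<^sub>R (- d)) \<le> - \<psi>2 p2" using \<psi>2p by simp
    qed
    then show ?thesis by simp
  qed
  have n1: "outward_normal h D\<psi>1 p1 = e1" and n2: "outward_normal h D\<psi>2 p2 = e2"
    and l2: "D\<psi>2 p2 \<bullet> e2 > 0"
    using normal_from_cone[where p=p1 and h=h, OF U1(2) U1(1) p10 hR1 cone1]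
      normal_from_cone[where p=p2 and h=h, OF U2(2) U2(1) p20 hR2 cone2]
    by (auto simp: e1_def e2_def)
  have Gp1: "G p1 \<bullet> e1 = \<kappa>0" using neumann p1(1) U1 n1 by metis
  have Gp2: "G p2 \<bullet> e2 = \<kappa>0" using neumann p2(1) U2 n2 by metis
  have seg1: "\<exists>d>0. \<forall>t. 0 < t \<and> t < d \<longrightarrow> p1 - t *\<^sub>R (p1 /\<^sub>R norm p1) \<in> \<Omega>"
  proof (intro exI[of _ R1] conjI allI impI)
    show "R1 > 0" by (rule R1pos)
    fix t assume t: "0 < t \<and> t < R1"
    then have "norm (p1 - t *\<^sub>R (p1 /\<^sub>R norm p1)) = R1 - t" using norm_seg[OF p10, of t] by (simp add: R1_def)
    then show "p1 - t *\<^sub>R (p1 /\<^sub>R norm p1) \<in> \<Omega>" using ballsub t by auto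
  qed
  have seg2: "\<exists>d>0. \<forall>t. 0 < t \<and> t < d \<longrightarrow> p2 - t *\<^sub>R (p2 /\<^sub>R norm p2) \<in> \<Omega>"
  proof -
    have "((\<lambda>t. \<psi>2 (p2 + t *\<^sub>R (- e2))) has_real_derivative (D\<psi>2 p2 \<bullet> (- e2))) (at 0)"
      by (rule dir_deriv_1d[OF d\<psi>2])
    moreover have "D\<psi>2 p2 \<bullet> (- e2) < 0" using l2 by simp
    ultimately obtain d1 where d1: "d1 > 0" "\<And>t. t > 0 \<Longrightarrow> t < d1 \<Longrightarrow>
        \<psi>2 (p2 + 0 *\<^sub>R (- e2)) > \<psi>2 (p2 + (0 + t) *\<^sub>R (- e2))"
      using DERIV_neg_dec_right by blast
    obtain ep where ep: "ep > 0" "ball p2 ep \<subseteq> U2" using U2o U2(1) openE by blast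
    have ne2: "norm e2 = 1" using p20 by (simp add: e2_def)
    show ?thesis
    proof (intro exI[of _ "min d1 ep"] conjI allI impI)
      show "min d1 ep > 0" using d1 ep by simp
      fix t assume t: "0 < t \<and> t < min d1 ep"
      have "\<psi>2 (p2 - t *\<^sub>R e2) < 0" using d1(2)[of t] t \<psi>2p by simp
      moreover have "p2 - t *\<^sub>R e2 \<in> U2" using ep t ne2 by (auto simp: dist_norm)
      ultimately show "p2 - t *\<^sub>R (p2 /\<^sub>R norm p2) \<in> \<Omega>" using U2eq by (auto simp: e2_def)
    qed
  qed
  define Hn where "Hn = (\<lambda>x::real^'n. Hf h (norm x))"
  have ud: "\<forall>y\<in>\<Omega>. u differentiable (at y)" and ug: "\<forall>y\<in>\<Omega>. egrad u differentiable (at y)"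
    using u_C2 unfolding C2_on_def by auto
  have Hnf: "Hn differentiable (at y)" "egrad Hn differentiable (at y)" if "y \<noteq> 0" "norm y < T" for y
    using Hn_facts[OF ctx that] unfolding Hn_def by auto
  have OT: "norm y < T" if "y \<in> \<Omega>" for y using inT that closure_subset by blast
  have Hnc: "continuous_on (closure \<Omega>) Hn"
  proof -
    have "norm ` closure \<Omega> \<subseteq> {0..T}" using inT by (auto simp: less_imp_le)
    then show ?thesis unfolding Hn_def
      using continuous_on_compose2[OF Hf_cont[OF ctx] continuous_on_norm_id, of "closure \<Omega>"] by simp
  qed
  have mp: "\<forall>x\<in>closure \<Omega>. c * u x + c * Hn x \<le> M"
    if fb: "\<forall>y\<in>frontier \<Omega>. c * u y + c * Hn y \<le> M" for c M
  proof (rule max_principle[OF ctx Oopen bdd(1) pole inT small dim])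
    show "continuous_on (closure \<Omega>) (\<lambda>x. c * u x + c * Hn x)"
      using u_C1bar(1) Hnc by (intro continuous_intros)
    show "\<forall>y\<in>\<Omega> - {0}. (\<lambda>x. c * u x + c * Hn x) differentiable (at y)"
    proof
      fix y assume y: "y \<in> \<Omega> - {0}"
      have "u differentiable (at y)" using ud y by blast
      moreover have "Hn differentiable (at y)" using Hnf(1)[of y] y OT by blast
      ultimately show "(\<lambda>x. c * u x + c * Hn x) differentiable (at y)"
        by (intro differentiable_add differentiable_mult differentiable_const)
    qed
    show "\<forall>z\<in>\<Omega> - {0}. egrad (\<lambda>x. c * u x + c * Hn x) differentiable (at z)"
    proof
      fix z assume z: "z \<in> \<Omega> - {0}"
      show "egrad (\<lambda>x. c * u x + c * Hn x) differentiable (at z)"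
      proof (rule egrad_comb_diff[of "\<Omega> - {0}"])
        show "open (\<Omega> - {0})" using Oopen by (simp add: open_delete)
        show "z \<in> \<Omega> - {0}" by (rule z)
        show "u differentiable (at y)" if "y \<in> \<Omega> - {0}" for y using ud that by blast
        show "Hn differentiable (at y)" if "y \<in> \<Omega> - {0}" for y using Hnf(1)[of y] that OT by blast
        show "egrad u differentiable (at z)" using ug z by blast
        show "egrad Hn differentiable (at z)" using Hnf(2)[of z] z OT by blast
      qed
    qed
    show "\<forall>z\<in>\<Omega> - {0}. 0 \<le> laplace_beltrami h (\<lambda>x. c * u x + c * Hn x) z"
    proof
      fix z assume z: "z \<in> \<Omega> - {0}"
      have z0: "z \<noteq> 0" "norm z < T" using z OT by auto
      have "laplace_beltrami h (\<lambda>x. c * u x + c * Hn x) z = c * laplace_beltrami h u z + c * laplace_beltrami h Hn z"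
      proof (rule LB_lin[of z "\<Omega> - {0}"])
        show "z \<noteq> 0" by (rule z0(1))
        show "open (\<Omega> - {0})" using Oopen by (simp add: open_delete)
        show "z \<in> \<Omega> - {0}" by (rule z)
        show "u differentiable (at y)" if "y \<in> \<Omega> - {0}" for y using ud that by blast
        show "Hn differentiable (at y)" if "y \<in> \<Omega> - {0}" for y using Hnf(1)[of y] that OT by blast
        show "egrad u differentiable (at z)" using ug z by blast
        show "egrad Hn differentiable (at z)" using Hnf(2)[of z] z0 by blast
        show "h differentiable (at (norm z))" using hd z0 by simp
        show "h (norm z) \<noteq> 0" using hp[of "norm z"] z0 by simp
      qed
      also have "laplace_beltrami h Hn z = real CARD('n) * deriv h (norm z)"
        unfolding Hn_def by (rule LB_Hf[OF ctx z0])
      also have "laplace_beltrami h u z = - (real CARD('n) * deriv h (norm z))"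
        using pde z by force
      finally show "0 \<le> laplace_beltrami h (\<lambda>x. c * u x + c * Hn x) z" by simp
    qed
    show "\<forall>y\<in>frontier \<Omega>. c * u y + c * Hn y \<le> M" by (rule fb)
  qed
  define \<Phi> where "\<Phi> r = \<phi> r + Hf h r" for r
  have vfr: "u y + Hn y = \<Phi> (norm y)" if "y \<in> frontier \<Omega>" for y
    using dirichlet that by (simp add: Hn_def \<Phi>_def)
  have Phi_mono: "\<Phi> a \<le> \<Phi> b" if ab: "R0 \<le> a" "a \<le> b" "b \<le> R" for a b
  proof (cases "a = b")
    case True then show ?thesis by simp
  next
    case False
    then have ab': "a < b" using ab by simp
    have der: "(\<Phi> has_derivative (\<lambda>t. (d\<phi> x + h x) * t)) (at x within {a..b})"
      if x: "a \<le> x" "x \<le> b" for x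
    proof -
      have x0: "0 < x" "x < T" using x ab R_int RT by auto
      have "(\<phi> has_real_derivative d\<phi> x) (at x within {R0..R})" using phi_C1(2) x ab by auto
      then have d1: "(\<phi> has_real_derivative d\<phi> x) (at x within {a..b})"
        by (rule DERIV_subset) (use ab in auto)
      have d2: "(Hf h has_real_derivative h x) (at x within {a..b})"
        using Hf_deriv[OF ctx x0] by (rule has_field_derivative_at_within)
      have "(\<Phi> has_real_derivative d\<phi> x + h x) (at x within {a..b})"
        unfolding \<Phi>_def[abs_def] using DERIV_add[OF d1 d2] .
      then show ?thesis by (simp add: has_field_derivative_def)
    qed
    obtain x where x: "x \<in> {a<..<b}" "\<Phi> b - \<Phi> a = (d\<phi> x + h x) * (b - a)"
      using mvt_simple[OF ab' der] by blast
    have "x \<in> {R0..R}" using x ab by auto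
    then have "d\<phi> x \<ge> - h x" using phi_ge by blast
    then have "d\<phi> x + h x \<ge> 0" by simp
    then have "(d\<phi> x + h x) * (b - a) \<ge> 0" using ab' by simp
    then show ?thesis using x(2) by simp
  qed
  have frR: "R1 \<le> norm y \<and> norm y \<le> R2" if "y \<in> frontier \<Omega>" for y
    using p1(2) p2(2) that by (simp add: R1_def R2_def)
  have R1R2: "R1 = R2"
  proof (rule ccontr)
    assume "R1 \<noteq> R2"
    then have lt: "R1 < R2" using R1le2 by simp
    have sub: "{R1<..<R2} \<subseteq> {R0<..<R}" using R12 InfR1 SupR2 by simp
    have R0R1: "R0 \<le> R1"
    proof (rule ccontr)
      assume "\<not> R0 \<le> R1"
      define x where "x = (R1 + min R0 R2) / 2"
      have "x \<in> {R1<..<R2}" using lt \<open>\<not> R0 \<le> R1\<close> by (auto simp: x_def)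
      moreover have "x \<le> R0" using lt \<open>\<not> R0 \<le> R1\<close> by (auto simp: x_def)
      ultimately show False using sub by auto
    qed
    have R2R: "R2 \<le> R"
    proof (rule ccontr)
      assume "\<not> R2 \<le> R"
      define x where "x = (R2 + max R R1) / 2"
      have "x \<in> {R1<..<R2}" using lt \<open>\<not> R2 \<le> R\<close> by (auto simp: x_def)
      moreover have "R \<le> x" using lt \<open>\<not> R2 \<le> R\<close> by (auto simp: x_def)
      ultimately show False using sub by auto
    qed
    have up: "\<forall>x\<in>closure \<Omega>. 1 * u x + 1 * Hn x \<le> \<Phi> R2"
    proof (rule mp)
      show "\<forall>y\<in>frontier \<Omega>. 1 * u y + 1 * Hn y \<le> \<Phi> R2"
        using vfr frR Phi_mono R0R1 R2R by (smt (verit))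
    qed
    have lo: "\<forall>x\<in>closure \<Omega>. (-1) * u x + (-1) * Hn x \<le> - \<Phi> R1"
    proof (rule mp)
      show "\<forall>y\<in>frontier \<Omega>. (-1) * u y + (-1) * Hn y \<le> - \<Phi> R1"
        using vfr frR Phi_mono R0R1 R2R lt by (smt (verit))
    qed
    have b2: "1 * (G p2 \<bullet> (p2 /\<^sub>R norm p2) + h (norm p2)) \<ge> 0"
    proof (rule boundary_radial[OF ctx p2c(1) p20 _ seg2 u_C1bar(1,2) u_C1bar(3) ud])
      show "norm p2 < T" using inT p2c by blast
      obtain d where d: "d > 0" "\<And>t. 0 < t \<Longrightarrow> t < d \<Longrightarrow> p2 - t *\<^sub>R (p2 /\<^sub>R norm p2) \<in> \<Omega>"
        using seg2 by blast
      show "\<exists>d>0. \<forall>t. 0 < t \<and> t < d \<longrightarrow>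
          1 * (u (p2 - t *\<^sub>R (p2 /\<^sub>R norm p2)) + Hf h (norm (p2 - t *\<^sub>R (p2 /\<^sub>R norm p2))))
          \<le> 1 * (u p2 + Hf h (norm p2))"
      proof (intro exI[of _ d] conjI allI impI)
        show "d > 0" by (rule d(1))
        fix t assume t: "0 < t \<and> t < d"
        have "p2 - t *\<^sub>R (p2 /\<^sub>R norm p2) \<in> closure \<Omega>" using d(2)[of t] t closure_subset by blast
        then have "1 * u (p2 - t *\<^sub>R (p2 /\<^sub>R norm p2)) + 1 * Hn (p2 - t *\<^sub>R (p2 /\<^sub>R norm p2)) \<le> \<Phi> R2"
          using up by blast
        moreover have "u p2 + Hn p2 = \<Phi> R2" using vfr[OF p2(1)] by (simp add: R2_def)
        ultimately show "1 * (u (p2 - t *\<^sub>R (p2 /\<^sub>R norm p2)) + Hf h (norm (p2 - t *\<^sub>R (p2 /\<^sub>R norm p2))))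
          \<le> 1 * (u p2 + Hf h (norm p2))" by (simp add: Hn_def)
      qed
    qed
    have b1: "(-1) * (G p1 \<bullet> (p1 /\<^sub>R norm p1) + h (norm p1)) \<ge> 0"
    proof (rule boundary_radial[OF ctx p1c(1) p10 _ seg1 u_C1bar(1,2) u_C1bar(3) ud])
      show "norm p1 < T" using inT p1c by blast
      obtain d where d: "d > 0" "\<And>t. 0 < t \<Longrightarrow> t < d \<Longrightarrow> p1 - t *\<^sub>R (p1 /\<^sub>R norm p1) \<in> \<Omega>"
        using seg1 by blast
      show "\<exists>d>0. \<forall>t. 0 < t \<and> t < d \<longrightarrow>
          (-1) * (u (p1 - t *\<^sub>R (p1 /\<^sub>R norm p1)) + Hf h (norm (p1 - t *\<^sub>R (p1 /\<^sub>R norm p1))))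
          \<le> (-1) * (u p1 + Hf h (norm p1))"
      proof (intro exI[of _ d] conjI allI impI)
        show "d > 0" by (rule d(1))
        fix t assume t: "0 < t \<and> t < d"
        have "p1 - t *\<^sub>R (p1 /\<^sub>R norm p1) \<in> closure \<Omega>" using d(2)[of t] t closure_subset by blast
        then have "(-1) * u (p1 - t *\<^sub>R (p1 /\<^sub>R norm p1)) + (-1) * Hn (p1 - t *\<^sub>R (p1 /\<^sub>R norm p1)) \<le> - \<Phi> R1"
          using lo by blast
        moreover have "u p1 + Hn p1 = \<Phi> R1" using vfr[OF p1(1)] by (simp add: R1_def)
        ultimately show "(-1) * (u (p1 - t *\<^sub>R (p1 /\<^sub>R norm p1)) + Hf h (norm (p1 - t *\<^sub>R (p1 /\<^sub>R norm p1))))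
          \<le> (-1) * (u p1 + Hf h (norm p1))" by (simp add: Hn_def)
      qed
    qed
    have "h R1 \<le> h R2" using b1 b2 Gp1 Gp2 by (simp add: e1_def e2_def R1_def R2_def)
    moreover have "h R2 < h R1"
    proof -
      have "\<exists>z. R1 < z \<and> z < R2 \<and> h R2 - h R1 = (R2 - R1) * D 1 z"
      proof (rule MVT2[OF lt])
        fix x assume x: "R1 \<le> x" "x \<le> R2"
        have "x \<le> T" using x R2R RT by simp
        then show "(h has_real_derivative D 1 x) (at x)" using hat[of x] x R1pos TS by simp
      qed
      then obtain z where z: "R1 < z" "z < R2" "h R2 - h R1 = (R2 - R1) * D 1 z" by blast
      have "deriv h z < 0" using h_decr z R0R1 R2R by simp
      moreover have "deriv h z = D 1 z" using dh[of z] z R1pos R2R RT by simp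
      ultimately have "(R2 - R1) * D 1 z < 0" using lt by (simp add: mult_pos_neg)
      then show ?thesis using z by simp
    qed
    ultimately show False by simp
  qed
  have frR1: "norm y = R1" if "y \<in> frontier \<Omega>" for y using frR[OF that] R1R2 by simp
  have Oball: "\<Omega> = ball 0 R1"
  proof
    show "ball 0 R1 \<subseteq> \<Omega>" by (rule ballsub)
    have "\<Omega> \<subseteq> interior (cball 0 R2)" by (rule interior_maximal[OF cballsup Oopen])
    then show "\<Omega> \<subseteq> ball 0 R1" using R1R2 by simp
  qed
  have up: "\<forall>x\<in>closure \<Omega>. 1 * u x + 1 * Hn x \<le> \<Phi> R1"
    by (rule mp) (use vfr frR1 in simp)
  have vfr1: "u y + Hn y = \<Phi> R1" if "y \<in> frontier \<Omega>" for y using vfr[OF that] frR1[OF that] by simp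
  have lo: "\<forall>x\<in>closure \<Omega>. (-1) * u x + (-1) * Hn x \<le> - \<Phi> R1"
  proof (rule mp)
    show "\<forall>y\<in>frontier \<Omega>. (-1) * u y + (-1) * Hn y \<le> - \<Phi> R1"
    proof
      fix y assume "y \<in> frontier \<Omega>"
      then have "u y + Hn y = \<Phi> R1" by (rule vfr1)
      then show "(-1) * u y + (-1) * Hn y \<le> - \<Phi> R1" by simp
    qed
  qed
  have "\<forall>x\<in>closure \<Omega>. u x = (\<lambda>r. \<Phi> R1 - Hf h r) (norm x)"
    using up lo by (force simp: Hn_def)
  then have "\<exists>f. \<forall>x\<in>closure \<Omega>. u x = f (norm x)" by (intro exI[of _ "\<lambda>r. \<Phi> R1 - Hf h r"]) simp
  moreover have "\<exists>\<rho>>0. \<Omega> = ball 0 \<rho>" using Oball R1pos by blast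
  ultimately show ?thesis by blast
qed

end
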